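(* Let $a\in\mathbb{R}$ with $|a|<1$, and let $c_k,s_k,\widetilde c_k,\widetilde s_k$ ($k\in\mathbb{N}$) be as follows: $c_k(x)=\sqrt2\cos(2k\pi x)$, $s_k(x)=\sqrt2\sin(2k\pi x)$, $\widehat c_k(x)=\sqrt{1-a^2}\sum_{n\ge0}a^nc_k(2^nx)$, $\widehat s_k(x)=\sqrt{1-a^2}\sum_{n\ge0}a^ns_k(2^nx)$, and $\widetilde c_i=\widehat c_i$, $\widetilde s_i=\widehat s_i$ for $i$ odd, $\widetilde c_i=\sqrt{1-a^2}\,\widehat c_i-a\,c_{i/2}$, $\widetilde s_i=\sqrt{1-a^2}\,\widehat s_i-a\,s_{i/2}$ for $i$ even. If $h\in L^2([0,1])$ has Fourier expansion $$h(x)=\alpha_0+\sum_{n=1}^\infty[\alpha_nc_n(x)+\beta_ns_n(x)],$$ then on $[0,1]$ it also has the expansion $$h(x)=\widetilde\alpha_0+\sum_{n=1}^\infty[\widetilde\alpha_n\widetilde c_n(x)+\widetilde\beta_n\widetilde s_n(x)],$$ where $\widetilde\alpha_0=\alpha_0$ and $$\widetilde\alpha_n=\begin{cases}\sqrt{1-a^2}\sum_{m=0}^\infty a^m\alpha_{n2^m} & n\text{ odd},\\ -a\,\alpha_{n/2}+(1-a^2)\sum_{m=0}^\infty a^m\alpha_{n2^m} & n\text{ even},\end{cases}\qquad \widetilde\beta_n=\begin{cases}\sqrt{1-a^2}\sum_{m=0}^\infty a^m\beta_{n2^m} & n\text{ odd},\\ -a\,\beta_{n/2}+(1-a^2)\sum_{m=0}^\infty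 a^m\beta_{n2^m} & n\text{ even}.\end{cases}$$
   Context: $L^2([0,1])$ carries the inner product $\langle f,h\rangle=\int_0^1fh\,dx$; $\{1,c_k,s_k\}$ and $\{1,\widetilde c_k,\widetilde s_k\}$ are complete orthonormal bases of $L^2([0,1])$, and the expansions are understood in $L^2([0,1])$. *)

theory Defs
  imports "HOL-Analysis.Analysis"
begin

definition cfun :: "nat \<Rightarrow> real \<Rightarrow> real" where
  "cfun k x = sqrt 2 * cos (2 * real k * pi * x)"

definition sfun :: "nat \<Rightarrow> real \<Rightarrow> real" where
  "sfun k x = sqrt 2 * sin (2 * real k * pi * x)"

definition chat :: "real \<Rightarrow> nat \<Rightarrow> real \<Rightarrow> real" where
  "chat a k x = sqrt (1 - a^2) * (\<Sum>n. a^n * cfun k (2^n * x))"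

definition shat :: "real \<Rightarrow> nat \<Rightarrow> real \<Rightarrow> real" where
  "shat a k x = sqrt (1 - a^2) * (\<Sum>n. a^n * sfun k (2^n * x))"

definition ctil :: "real \<Rightarrow> nat \<Rightarrow> real \<Rightarrow> real" where
  "ctil a i x = (if odd i then chat a i x
                 else sqrt (1 - a^2) * chat a i x - a * cfun (i div 2) x)"

definition stil :: "real \<Rightarrow> nat \<Rightarrow> real \<Rightarrow> real" where
  "stil a i x = (if odd i then shat a i x
                 else sqrt (1 - a^2) * shat a i x - a * sfun (i div 2) x)"

definition coef_til :: "real \<Rightarrow> (nat \<Rightarrow> real) \<Rightarrow> nat \<Rightarrow> real" where
  "coef_til a \<alpha> n = (if n = 0 then \<alpha> 0
     else if odd n then sqrt (1 - a^2) * (\<Sum>m. a^m * \<alpha> (n * 2^m))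
     else - a * \<alpha> (n div 2) + (1 - a^2) * (\<Sum>m. a^m * \<alpha> (n * 2^m)))"

definition L2_01 :: "(real \<Rightarrow> real) \<Rightarrow> bool" where
  "L2_01 h \<longleftrightarrow> h measurable_on {0..1} \<and> (\<lambda>x. (h x)^2) integrable_on {0..1}"

end

theory Submission
  imports Defs
begin

abbreviation "I01 \<equiv> {0..1::real}"

lemma I01_leb[simp]: "I01 \<in> sets lebesgue" by simp

lemma mo_iff: "f measurable_on I01 \<longleftrightarrow> f \<in> borel_measurable (lebesgue_on I01)"
  for f :: "real \<Rightarrow> real"
  by (rule measurable_on_iff_borel_measurable) simp

lemma mo_bound_int:
  fixes f g :: "real \<Rightarrow> real"
  assumes "f measurable_on I01" "g integrable_on I01" "\<And>x. x \<in> I01 \<Longrightarrow> \<bar>f x\<bar> \<le> g x"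
  shows "f integrable_on I01"
  using measurable_bounded_by_integrable_imp_integrable_real[of f I01 g] assms mo_iff by auto

lemma mo_bound_absint:
  fixes f g :: "real \<Rightarrow> real"
  assumes "f measurable_on I01" "g integrable_on I01" "\<And>x. x \<in> I01 \<Longrightarrow> \<bar>f x\<bar> \<le> g x"
  shows "f absolutely_integrable_on I01"
  using measurable_bounded_by_integrable_imp_absolutely_integrable[of f I01 g] assms mo_iff by auto

lemma mo_mult: "f measurable_on S \<Longrightarrow> g measurable_on S \<Longrightarrow> (\<lambda>x. f x * g x) measurable_on S"
  for f g :: "real \<Rightarrow> real"
  using measurable_on_bilinear[OF bilinear_times] by blast

lemma mo_cont: "continuous_on I01 f \<Longrightarrow> f measurable_on I01" for f :: "real \<Rightarrow> real"
  using mo_iff continuous_imp_measurable_on_sets_lebesgue[of I01 f] by auto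

lemma mo_integrable: "f integrable_on I01 \<Longrightarrow> f measurable_on I01" for f :: "real \<Rightarrow> real"
  using mo_iff integrable_imp_measurable by blast

lemma const_int[simp]: "(\<lambda>x. c) integrable_on I01" by (rule integrable_const_ivl)

lemma L2_meas: "L2_01 f \<Longrightarrow> f measurable_on I01" by (simp add: L2_01_def)
lemma L2_sq: "L2_01 f \<Longrightarrow> (\<lambda>x. (f x)^2) integrable_on I01" by (simp add: L2_01_def)

lemma L2_prod:
  assumes "L2_01 f" "L2_01 g"
  shows "(\<lambda>x. f x * g x) integrable_on I01" "(\<lambda>x. f x * g x) absolutely_integrable_on I01"
proof -
  have b: "\<bar>f x * g x\<bar> \<le> ((f x)^2 + (g x)^2) / 2" for x
  proof -
    have "0 \<le> (\<bar>f x\<bar> - \<bar>g x\<bar>)^2" by simp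
    then show ?thesis by (simp add: power2_eq_square abs_mult algebra_simps)
  qed
  have i: "(\<lambda>x. ((f x)^2 + (g x)^2) / 2) integrable_on I01"
    using L2_sq[OF assms(1)] L2_sq[OF assms(2)] by (intro integrable_on_divide integrable_add)
  have m: "(\<lambda>x. f x * g x) measurable_on I01" using assms L2_meas mo_mult by blast
  show "(\<lambda>x. f x * g x) integrable_on I01" by (rule mo_bound_int[OF m i b])
  show "(\<lambda>x. f x * g x) absolutely_integrable_on I01" by (rule mo_bound_absint[OF m i b])
qed

lemma L2_const[simp]: "L2_01 (\<lambda>x. c)"
  by (simp add: L2_01_def)

lemma L2_int: assumes "L2_01 f" shows "f integrable_on I01" "f absolutely_integrable_on I01"
  using L2_prod[OF assms L2_const[of 1]] by auto

lemma L2_add: "L2_01 f \<Longrightarrow> L2_01 g \<Longrightarrow> L2_01 (\<lambda>x. f x + g x)"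
  unfolding L2_01_def
proof (intro conjI)
  assume a: "f measurable_on I01 \<and> (\<lambda>x. (f x)\<^sup>2) integrable_on I01" "g measurable_on I01 \<and> (\<lambda>x. (g x)\<^sup>2) integrable_on I01"
  then have fg: "L2_01 f" "L2_01 g" by (auto simp: L2_01_def)
  show m: "(\<lambda>x. f x + g x) measurable_on I01" using a measurable_on_add by blast
  have e: "(\<lambda>x. (f x + g x)^2) = (\<lambda>x. (f x)^2 + (g x)^2 + 2 * (f x * g x))"
    by (auto simp: power2_eq_square algebra_simps)
  show "(\<lambda>x. (f x + g x)\<^sup>2) integrable_on I01"
    unfolding e using a L2_prod[OF fg]
    by (intro integrable_add integrable_on_cmult_left[where c=2, simplified]) auto
qed

lemma L2_cmul: "L2_01 f \<Longrightarrow> L2_01 (\<lambda>x. c * f x)"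
  unfolding L2_01_def
proof (intro conjI)
  assume a: "f measurable_on I01 \<and> (\<lambda>x. (f x)\<^sup>2) integrable_on I01"
  show "(\<lambda>x. c * f x) measurable_on I01" using a measurable_on_cmul by blast
  show "(\<lambda>x. (c * f x)\<^sup>2) integrable_on I01"
    using a integrable_cmul[of "\<lambda>x. (f x)\<^sup>2" I01 "c^2"] by (simp add: power_mult_distrib)
qed

lemma L2_uminus: "L2_01 f \<Longrightarrow> L2_01 (\<lambda>x. - f x)"
  using L2_cmul[of f "-1"] by simp

lemma L2_diff: "L2_01 f \<Longrightarrow> L2_01 g \<Longrightarrow> L2_01 (\<lambda>x. f x - g x)"
  using L2_add[of f "\<lambda>x. - g x"] L2_uminus by simp

lemma L2_sum: "finite A \<Longrightarrow> (\<And>i. i \<in> A \<Longrightarrow> L2_01 (f i)) \<Longrightarrow> L2_01 (\<lambda>x. \<Sum>i\<in>A. f i x)"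
  by (induction A rule: finite_induct) (auto intro: L2_add)

lemma L2_bounded:
  assumes "f measurable_on I01" "\<And>x. x \<in> I01 \<Longrightarrow> \<bar>f x\<bar> \<le> B"
  shows "L2_01 f"
  unfolding L2_01_def
proof (intro conjI assms)
  show "(\<lambda>x. (f x)\<^sup>2) integrable_on I01"
  proof (rule mo_bound_int[where g="\<lambda>x. B^2"])
    show "(\<lambda>x. (f x)\<^sup>2) measurable_on I01" using mo_mult[OF assms(1) assms(1)] by (simp add: power2_eq_square)
    show "\<bar>(f x)\<^sup>2\<bar> \<le> B\<^sup>2" if "x \<in> I01" for x
    proof -
      have "\<bar>f x\<bar>^2 \<le> B^2" using assms(2)[OF that] by (intro power_mono) auto
      then show ?thesis by simp
    qed
  qed simp
qed

lemma L2_cont: "continuous_on I01 f \<Longrightarrow> L2_01 f"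
proof -
  assume c: "continuous_on I01 f"
  have "compact (f ` I01)" using c compact_continuous_image by blast
  then obtain B where "\<forall>y\<in>f ` I01. norm y \<le> B" using compact_imp_bounded bounded_iff by metis
  then show ?thesis using L2_bounded[OF mo_cont[OF c], of B] by auto
qed

definition ip :: "(real \<Rightarrow> real) \<Rightarrow> (real \<Rightarrow> real) \<Rightarrow> real" where
  "ip f g = integral I01 (\<lambda>x. f x * g x)"

lemma ip_sym: "ip f g = ip g f" by (simp add: ip_def mult.commute)

lemma ip_add_left: "L2_01 f \<Longrightarrow> L2_01 g \<Longrightarrow> L2_01 u \<Longrightarrow> ip (\<lambda>x. f x + g x) u = ip f u + ip g u"
  unfolding ip_def using L2_prod[of f u] L2_prod[of g u]
  by (simp add: distrib_right integral_add)

lemma ip_diff_left: "L2_01 f \<Longrightarrow> L2_01 g \<Longrightarrow> L2_01 u \<Longrightarrow> ip (\<lambda>x. f x - g x) u = ip f u - ip g u"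
  unfolding ip_def using L2_prod[of f u] L2_prod[of g u]
  by (simp add: left_diff_distrib integral_diff)

lemma ip_cmul_left: "ip (\<lambda>x. c * f x) u = c * ip f u"
  unfolding ip_def by (simp add: mult.assoc)

lemma ip_cmul_right: "ip u (\<lambda>x. c * f x) = c * ip u f"
  unfolding ip_def by (simp add: algebra_simps)

lemma ip_sum_left: "finite A \<Longrightarrow> (\<And>i. i \<in> A \<Longrightarrow> L2_01 (f i)) \<Longrightarrow> L2_01 u \<Longrightarrow>
   ip (\<lambda>x. \<Sum>i\<in>A. f i x) u = (\<Sum>i\<in>A. ip (f i) u)"
  unfolding ip_def using L2_prod
  by (simp add: sum_distrib_right integral_sum)

lemma ip_sum_right: "finite A \<Longrightarrow> (\<And>i. i \<in> A \<Longrightarrow> L2_01 (f i)) \<Longrightarrow> L2_01 u \<Longrightarrow>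
   ip u (\<lambda>x. \<Sum>i\<in>A. f i x) = (\<Sum>i\<in>A. ip u (f i))"
  using ip_sum_left[of A f u] by (simp add: ip_sym)

lemma ip_add_right: "L2_01 f \<Longrightarrow> L2_01 g \<Longrightarrow> L2_01 u \<Longrightarrow> ip u (\<lambda>x. f x + g x) = ip u f + ip u g"
  using ip_add_left by (simp add: ip_sym)

lemma ip_diff_right: "L2_01 f \<Longrightarrow> L2_01 g \<Longrightarrow> L2_01 u \<Longrightarrow> ip u (\<lambda>x. f x - g x) = ip u f - ip u g"
  using ip_diff_left by (simp add: ip_sym)

lemma sq_int: "integral I01 (\<lambda>x. (f x)^2) = ip f f"
  by (simp add: ip_def power2_eq_square)

lemma ip_nonneg: "0 \<le> ip f f"
  unfolding ip_def by (cases "(\<lambda>x. f x * f x) integrable_on I01") (auto intro: integral_nonneg simp: not_integrable_integral)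


lemma hasint_cos_int:
  fixes n :: int
  shows "((\<lambda>x. cos (2 * pi * of_int n * x)) has_integral (if n = 0 then 1 else 0)) I01"
proof (cases "n = 0")
  case True then show ?thesis using has_integral_const_real[of "1::real" 0 1] by simp
next
  case False
  have d: "((\<lambda>x. sin (2 * pi * of_int n * x) / (2 * pi * of_int n)) has_vector_derivative cos (2 * pi * of_int n * x)) (at x within I01)" for x
  proof -
    have "((\<lambda>x. sin (2 * pi * of_int n * x) / (2 * pi * of_int n)) has_real_derivative
            cos (2 * pi * of_int n * x) * (2 * pi * of_int n) / (2 * pi * of_int n)) (at x within I01)"
      by (auto intro!: derivative_eq_intros)
    then show ?thesis using False by (simp add: has_real_derivative_iff_has_vector_derivative)
  qed
  have "((\<lambda>x. cos (2 * pi * of_int n * x)) has_integral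
     (sin (2 * pi * of_int n * 1) / (2 * pi * of_int n) - sin (2 * pi * of_int n * 0) / (2 * pi * of_int n))) I01"
    by (rule fundamental_theorem_of_calculus) (use d in auto)
  moreover have "sin (2 * pi * of_int n * 1) = 0" using sin_int_2pin[of n] by simp
  ultimately show ?thesis using False by simp
qed

lemma hasint_sin_int:
  fixes n :: int
  shows "((\<lambda>x. sin (2 * pi * of_int n * x)) has_integral 0) I01"
proof (cases "n = 0")
  case True then show ?thesis by simp
next
  case False
  have d: "((\<lambda>x. - cos (2 * pi * of_int n * x) / (2 * pi * of_int n)) has_vector_derivative sin (2 * pi * of_int n * x)) (at x within I01)" for x
  proof -
    have "((\<lambda>x. - cos (2 * pi * of_int n * x) / (2 * pi * of_int n)) has_real_derivative
            sin (2 * pi * of_int n * x) * (2 * pi * of_int n) / (2 * pi * of_int n)) (at x within I01)"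
      by (auto intro!: derivative_eq_intros)
    then show ?thesis using False by (simp add: has_real_derivative_iff_has_vector_derivative)
  qed
  have "((\<lambda>x. sin (2 * pi * of_int n * x)) has_integral
     (- cos (2 * pi * of_int n * 1) / (2 * pi * of_int n) - - cos (2 * pi * of_int n * 0) / (2 * pi * of_int n))) I01"
    by (rule fundamental_theorem_of_calculus) (use d in auto)
  moreover have "cos (2 * pi * of_int n * 1) = 1" using cos_int_2pin[of n] by simp
  ultimately show ?thesis using False by simp
qed

definition trig :: "bool \<Rightarrow> nat \<Rightarrow> real \<Rightarrow> real" where
  "trig b k x = (if b then cfun k x else sfun k x)"

lemma trig_True: "trig True k = cfun k" and trig_False: "trig False k = sfun k"
  by (auto simp: trig_def fun_eq_iff)

lemma cont_trig: "continuous_on S (trig b k)"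
  unfolding trig_def cfun_def sfun_def by (cases b) (auto intro!: continuous_intros)

lemma trig_bound: "\<bar>trig b k x\<bar> \<le> sqrt 2"
  unfolding trig_def cfun_def sfun_def by (auto simp: abs_mult)

lemma L2_trig: "L2_01 (trig b k)"
  using L2_cont cont_trig by blast

lemma trig_meas: "trig b k measurable_on I01"
  using L2_trig L2_meas by blast

lemma ang: "2 * real k * pi * x = 2 * pi * of_int (int k) * x" by simp
lemma ang_diff: "2 * real k * pi * x - 2 * real m * pi * x = 2 * pi * of_int (int k - int m) * x"
  by (simp add: algebra_simps)
lemma ang_add: "2 * real k * pi * x + 2 * real m * pi * x = 2 * pi * of_int (int k + int m) * x"
  by (simp add: algebra_simps)

lemma ip_trig:
  assumes "k \<ge> 1" "m \<ge> 1"
  shows "ip (trig b k) (trig b' m) = (if b = b' \<and> k = m then 1 else 0)"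
proof -
  define A where "A x = 2 * real k * pi * x" for x
  define B where "B x = 2 * real m * pi * x" for x
  have c1: "((\<lambda>x. cos (A x - B x)) has_integral (if k = m then 1 else 0)) I01"
    using hasint_cos_int[of "int k - int m"] unfolding A_def B_def ang_diff by simp
  have c2: "((\<lambda>x. cos (A x + B x)) has_integral 0) I01"
    using hasint_cos_int[of "int k + int m"] assms unfolding A_def B_def ang_add by simp
  have s1: "((\<lambda>x. sin (A x - B x)) has_integral 0) I01"
    using hasint_sin_int[of "int k - int m"] unfolding A_def B_def ang_diff by simp
  have s2: "((\<lambda>x. sin (A x + B x)) has_integral 0) I01"
    using hasint_sin_int[of "int k + int m"] unfolding A_def B_def ang_add by simp
  have cc: "cfun k x * cfun m x = cos (A x - B x) + cos (A x + B x)" for x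
    unfolding cfun_def A_def[symmetric] B_def[symmetric] cos_diff cos_add by (simp add: algebra_simps)
  have ss: "sfun k x * sfun m x = cos (A x - B x) - cos (A x + B x)" for x
    unfolding sfun_def A_def[symmetric] B_def[symmetric] cos_diff cos_add by (simp add: algebra_simps)
  have cs: "cfun k x * sfun m x = sin (A x + B x) - sin (A x - B x)" for x
    unfolding cfun_def sfun_def A_def[symmetric] B_def[symmetric] sin_diff sin_add by (simp add: algebra_simps)
  have sc: "sfun k x * cfun m x = sin (A x + B x) + sin (A x - B x)" for x
    unfolding cfun_def sfun_def A_def[symmetric] B_def[symmetric] sin_diff sin_add by (simp add: algebra_simps)
  show ?thesis
  proof (cases b; cases b')
    assume "b" "b'"
    then show ?thesis unfolding ip_def trig_def using has_integral_add[OF c1 c2] cc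
      by (simp add: integral_unique)
  next
    assume "b" "\<not> b'"
    then show ?thesis unfolding ip_def trig_def using has_integral_diff[OF s2 s1] cs
      by (simp add: integral_unique)
  next
    assume "\<not> b" "b'"
    then show ?thesis unfolding ip_def trig_def using has_integral_add[OF s2 s1] sc
      by (simp add: integral_unique)
  next
    assume "\<not> b" "\<not> b'"
    then show ?thesis unfolding ip_def trig_def using has_integral_diff[OF c1 c2] ss
      by (simp add: integral_unique)
  qed
qed

lemma ip_one_trig:
  assumes "k \<ge> 1"
  shows "ip (\<lambda>x. 1) (trig b k) = 0"
proof -
  have c: "((\<lambda>x. cos (2 * real k * pi * x)) has_integral 0) I01"
    using hasint_cos_int[of "int k"] assms unfolding ang by simp
  have s: "((\<lambda>x. sin (2 * real k * pi * x)) has_integral 0) I01"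
    using hasint_sin_int[of "int k"] unfolding ang by simp
  show ?thesis unfolding ip_def trig_def cfun_def sfun_def
    using c s by (cases b) (auto simp: integral_unique)
qed

lemma ip_one_one: "ip (\<lambda>x. 1) (\<lambda>x. 1) = 1"
  unfolding ip_def by simp


lemma geom_partial_bound:
  fixes a :: real assumes "\<bar>a\<bar> < 1"
  shows "(\<Sum>l<m. \<bar>a\<bar>^l) \<le> 1 / (1 - \<bar>a\<bar>)"
proof -
  have s: "summable (\<lambda>l. \<bar>a\<bar>^l)" using assms by (simp add: summable_geometric)
  have "(\<Sum>l<m. \<bar>a\<bar>^l) \<le> (\<Sum>l. \<bar>a\<bar>^l)" by (rule sum_le_suminf[OF s]) auto
  also have "\<dots> = 1 / (1 - \<bar>a\<bar>)" using suminf_geometric[of "\<bar>a\<bar>"] assms by simp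
  finally show ?thesis .
qed

lemma series_summable:
  fixes a :: real assumes "\<bar>a\<bar> < 1" "\<And>l. \<bar>g l\<bar> \<le> B"
  shows "summable (\<lambda>l. a^l * g l)"
proof (rule summable_comparison_test[where g="\<lambda>l. B * \<bar>a\<bar>^l"])
  show "\<exists>N. \<forall>n\<ge>N. norm (a ^ n * g n) \<le> B * \<bar>a\<bar> ^ n"
    using assms(2) by (auto simp: abs_mult power_abs mult.commute intro!: mult_right_mono)
  show "summable (\<lambda>l. B * \<bar>a\<bar> ^ l)" using assms(1) by (simp add: summable_geometric)
qed

lemma series_partial_bound:
  fixes a :: real assumes "\<bar>a\<bar> < 1" "\<And>l. \<bar>g l\<bar> \<le> B"
  shows "\<bar>\<Sum>l<m. a^l * g l\<bar> \<le> B / (1 - \<bar>a\<bar>)"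
proof -
  have B: "0 \<le> B" using assms(2)[of 0] by simp
  have "\<bar>\<Sum>l<m. a^l * g l\<bar> \<le> (\<Sum>l<m. \<bar>a^l * g l\<bar>)" by (rule sum_abs)
  also have "\<dots> \<le> (\<Sum>l<m. B * \<bar>a\<bar>^l)"
    by (intro sum_mono) (use assms(2) in \<open>auto simp: abs_mult power_abs mult.commute intro!: mult_right_mono\<close>)
  also have "\<dots> = B * (\<Sum>l<m. \<bar>a\<bar>^l)" by (simp add: sum_distrib_left)
  also have "\<dots> \<le> B * (1 / (1 - \<bar>a\<bar>))" by (intro mult_left_mono geom_partial_bound assms B)
  finally show ?thesis by simp
qed

lemma series_bound:
  fixes a :: real assumes "\<bar>a\<bar> < 1" "\<And>l. \<bar>g l\<bar> \<le> B"
  shows "\<bar>\<Sum>l. a^l * g l\<bar> \<le> B / (1 - \<bar>a\<bar>)"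
proof -
  have "(\<lambda>m. \<Sum>l<m. a^l * g l) \<longlonglongrightarrow> (\<Sum>l. a^l * g l)"
    using summable_LIMSEQ[OF series_summable[OF assms]] .
  then have "(\<lambda>m. \<bar>\<Sum>l<m. a^l * g l\<bar>) \<longlonglongrightarrow> \<bar>\<Sum>l. a^l * g l\<bar>" by (rule tendsto_rabs)
  then show ?thesis
    by (rule LIMSEQ_le_const2) (use series_partial_bound[OF assms] in auto)
qed

lemma int_series:
  fixes a :: real and f :: "real \<Rightarrow> real" and g :: "nat \<Rightarrow> real \<Rightarrow> real"
  assumes a: "\<bar>a\<bar> < 1" and f: "f absolutely_integrable_on I01"
    and gm: "\<And>l. g l measurable_on I01" and gb: "\<And>l x. \<bar>g l x\<bar> \<le> B"
  shows "(\<lambda>l. a^l * integral I01 (\<lambda>x. f x * g l x)) sums integral I01 (\<lambda>x. f x * (\<Sum>l. a^l * g l x))"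
    and "(\<lambda>x. f x * (\<Sum>l. a^l * g l x)) integrable_on I01"
proof -
  define C where "C = B / (1 - \<bar>a\<bar>)"
  define F where "F m x = f x * (\<Sum>l<m. a^l * g l x)" for m x
  have fi: "f integrable_on I01" using f by (simp add: absolutely_integrable_on_def)
  have fai: "(\<lambda>x. \<bar>f x\<bar>) integrable_on I01" using f by (simp add: absolutely_integrable_on_def)
  have fm: "f measurable_on I01" using fi mo_integrable by blast
  have dom_int: "(\<lambda>x. \<bar>f x\<bar> * C) integrable_on I01"
    using integrable_cmul[OF fai, of C] by (simp add: mult.commute)
  have Fb: "\<bar>F m x\<bar> \<le> \<bar>f x\<bar> * C" for m x
    unfolding F_def C_def abs_mult by (intro mult_left_mono series_partial_bound[OF a gb]) auto
  have fgl: "(\<lambda>x. f x * g l x) integrable_on I01" for l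
  proof (rule mo_bound_int[where g="\<lambda>x. \<bar>f x\<bar> * B"])
    show "(\<lambda>x. f x * g l x) measurable_on I01" using mo_mult[OF fm gm] .
    show "(\<lambda>x. \<bar>f x\<bar> * B) integrable_on I01"
      using integrable_cmul[OF fai, of B] by (simp add: mult.commute)
    show "\<bar>f x * g l x\<bar> \<le> \<bar>f x\<bar> * B" for x using gb by (simp add: abs_mult mult_left_mono)
  qed
  have Fe: "F m = (\<lambda>x. \<Sum>l<m. a^l * (f x * g l x))" for m
    unfolding F_def by (auto simp: sum_distrib_left algebra_simps)
  have fgl': "(\<lambda>x. a^l * (f x * g l x)) integrable_on I01" for l
    using integrable_cmul[OF fgl[of l], of "a^l"] by simp
  have Fi: "F m integrable_on I01" for m
    unfolding Fe by (intro integrable_sum) (use fgl' in \<open>auto\<close>)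
  have Fint: "integral I01 (F m) = (\<Sum>l<m. a^l * integral I01 (\<lambda>x. f x * g l x))" for m
    unfolding Fe using fgl fgl' by (subst integral_sum) auto
  have conv: "(\<lambda>m. F m x) \<longlonglongrightarrow> f x * (\<Sum>l. a^l * g l x)" for x
    unfolding F_def by (intro tendsto_mult_left summable_LIMSEQ series_summable[OF a gb])
  note dc = dominated_convergence[where f=F and h="\<lambda>x. \<bar>f x\<bar> * C" and S=I01, OF Fi dom_int _ conv]
  show "(\<lambda>x. f x * (\<Sum>l. a^l * g l x)) integrable_on I01" using dc(1) Fb by auto
  show "(\<lambda>l. a^l * integral I01 (\<lambda>x. f x * g l x)) sums integral I01 (\<lambda>x. f x * (\<Sum>l. a^l * g l x))"
    unfolding sums_def using dc(2) Fb Fint by auto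
qed

definition G :: "real \<Rightarrow> bool \<Rightarrow> nat \<Rightarrow> real \<Rightarrow> real" where
  "G a b n x = (\<Sum>l. a^l * trig b (n * 2^l) x)"

lemma G_bound: "\<bar>a\<bar> < 1 \<Longrightarrow> \<bar>G a b n x\<bar> \<le> sqrt 2 / (1 - \<bar>a\<bar>)"
  unfolding G_def by (rule series_bound) (auto intro: trig_bound)

lemma G_meas: assumes "\<bar>a\<bar> < 1" shows "G a b n measurable_on I01"
proof (rule measurable_on_limit[where N="{}" and f="\<lambda>m x. \<Sum>l<m. a^l * trig b (n * 2^l) x"])
  show "(\<lambda>x. \<Sum>l<m. a ^ l * trig b (n * 2 ^ l) x) measurable_on I01" for m
    by (intro measurable_on_sum measurable_on_cmul trig_meas) auto
  show "(\<lambda>m. \<Sum>l<m. a ^ l * trig b (n * 2 ^ l) x) \<longlonglongrightarrow> G a b n x" for x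
    unfolding G_def by (intro summable_LIMSEQ series_summable[OF assms]) (auto intro: trig_bound)
qed simp

lemma L2_G: "\<bar>a\<bar> < 1 \<Longrightarrow> L2_01 (G a b n)"
  using L2_bounded[OF G_meas G_bound] by blast

lemma ip_G:
  assumes a: "\<bar>a\<bar> < 1" and f: "L2_01 f"
  shows "(\<lambda>l. a^l * ip f (trig b (n * 2^l))) sums ip f (G a b n)"
  unfolding ip_def G_def
  by (rule int_series(1)[OF a L2_int(2)[OF f] trig_meas trig_bound])

lemma cfun_scale: "cfun n (2^l * x) = cfun (n * 2^l) x"
  unfolding cfun_def by (simp add: algebra_simps)
lemma sfun_scale: "sfun n (2^l * x) = sfun (n * 2^l) x"
  unfolding sfun_def by (simp add: algebra_simps)

lemma chat_G: "chat a n x = sqrt (1 - a^2) * G a True n x"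
  unfolding chat_def G_def cfun_scale trig_True ..
lemma shat_G: "shat a n x = sqrt (1 - a^2) * G a False n x"
  unfolding shat_def G_def sfun_scale trig_False ..


lemma odd_decomp: "(n::nat) \<ge> 1 \<Longrightarrow> \<exists>j p. odd j \<and> n = j * 2^p"
proof (induction n rule: less_induct)
  case (less n)
  show ?case
  proof (cases "odd n")
    case True then show ?thesis by (rule_tac x=n in exI, rule_tac x=0 in exI) simp
  next
    case False
    then obtain m where m: "n = 2 * m" by (auto elim: evenE)
    with less.prems have "m \<ge> 1" "m < n" by auto
    then obtain j p where "odd j" "m = j * 2^p" using less.IH by blast
    then show ?thesis using m by (rule_tac x=j in exI, rule_tac x="Suc p" in exI) simp
  qed
qed

lemma odd_eq_aux: "odd (j::nat) \<Longrightarrow> odd j' \<Longrightarrow> r \<le> s \<Longrightarrow> j * 2^r = j' * 2^s \<Longrightarrow> j = j' \<and> r = s"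
proof -
  assume o: "odd j" "odd j'" and rs: "r \<le> s" and e: "j * 2^r = j' * 2^s"
  have "j * 2^r = (j' * 2^(s-r)) * 2^r" using e rs by (simp add: power_add[symmetric])
  then have jj: "j = j' * 2^(s-r)" by simp
  have "s - r = 0"
  proof (rule ccontr)
    assume "s - r \<noteq> 0"
    then have "even (j' * 2^(s-r))" by simp
    with jj o show False by simp
  qed
  then show ?thesis using jj rs by simp
qed

lemma odd_eq: "odd (j::nat) \<Longrightarrow> odd j' \<Longrightarrow> (j * 2^r = j' * 2^s) \<longleftrightarrow> (j = j' \<and> r = s)"
  using odd_eq_aux[of j j' r s] odd_eq_aux[of j' j s r] by (cases "r \<le> s") auto

lemma odd_pow_pos: "odd (j::nat) \<Longrightarrow> j * 2^r \<ge> 1"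
proof -
  assume "odd j" then have "0 < j" using odd_pos by blast
  then have "0 < j * 2^r" by simp
  then show ?thesis by linarith
qed

lemma mul2pow: "(j::nat) * 2^p * 2^l = j * 2^(p+l)" by (simp add: power_add)

lemma ip_trig_G:
  assumes a: "\<bar>a\<bar> < 1" and j: "odd j" and j': "odd j'"
  shows "ip (trig b (j * 2^r)) (G a b' (j' * 2^p)) = (if b = b' \<and> j = j' \<and> p \<le> r then a^(r-p) else 0)"
proof -
  have s: "(\<lambda>l. a^l * ip (trig b (j * 2^r)) (trig b' (j' * 2^(p+l)))) sums ip (trig b (j * 2^r)) (G a b' (j' * 2^p))"
    using ip_G[OF a L2_trig, of b "j * 2^r" b' "j' * 2^p"] by (simp add: mul2pow)
  have e: "a^l * ip (trig b (j * 2^r)) (trig b' (j' * 2^(p+l))) =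
       (if l = r - p then (if b = b' \<and> j = j' \<and> p \<le> r then a^(r-p) else 0) else 0)" for l
    by (simp add: ip_trig[OF odd_pow_pos[OF j] odd_pow_pos[OF j']] odd_eq[OF j j'])
  show ?thesis using sums_unique2[OF s[unfolded e] sums_single] by simp
qed

lemma ip_G_trig:
  assumes a: "\<bar>a\<bar> < 1" and j: "odd j" and j': "odd j'"
  shows "ip (G a b' (j' * 2^p)) (trig b (j * 2^r)) = (if b = b' \<and> j = j' \<and> p \<le> r then a^(r-p) else 0)"
  using ip_trig_G[OF assms] by (simp add: ip_sym)

lemma ip_G_G_le:
  assumes a: "\<bar>a\<bar> < 1" and j: "odd j" and j': "odd j'" and pq: "p \<le> q"
  shows "ip (G a b (j * 2^p)) (G a b' (j' * 2^q)) = (if b = b' \<and> j = j' then a^(q-p) / (1 - a^2) else 0)"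
proof -
  have s: "(\<lambda>l. a^l * ip (G a b' (j' * 2^q)) (trig b (j * 2^(p+l)))) sums ip (G a b' (j' * 2^q)) (G a b (j * 2^p))"
    using ip_G[OF a L2_G[OF a], of b' "j' * 2^q" b "j * 2^p"] by (simp add: mul2pow)
  show ?thesis
  proof (cases "b = b' \<and> j = j'")
    case True
    have e: "a^l * ip (G a b' (j' * 2^q)) (trig b (j * 2^(p+l))) =
       (if q \<le> p + l then a^l * a^(p + l - q) else 0)" for l
      using True by (simp add: ip_G_trig[OF a j' j'])
    have a2: "\<bar>a^2\<bar> < 1" using a by (simp add: abs_square_less_1)
    have g: "(\<lambda>i. a^(q-p) * (a^2)^i) sums (a^(q-p) * (1 / (1 - a^2)))"
      by (intro sums_mult geometric_sums) (use a2 in simp)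
    have sh: "(\<lambda>i. (if q \<le> p + (i + (q-p)) then a^(i + (q-p)) * a^(p + (i + (q-p)) - q) else 0)) = (\<lambda>i. a^(q-p) * (a^2)^i)"
    proof
      fix i
      have "p + (i + (q-p)) - q = i" using pq by simp
      moreover have "a^(i + (q-p)) = a^(q-p) * a^i" by (simp add: power_add mult.commute)
      ultimately show "(if q \<le> p + (i + (q-p)) then a^(i + (q-p)) * a^(p + (i + (q-p)) - q) else 0) = a^(q-p) * (a^2)^i"
        using pq by (simp add: power_mult_distrib power2_eq_square)
    qed
    have "(\<lambda>l. (if q \<le> p + l then a^l * a^(p + l - q) else 0)) sums (a^(q-p) * (1 / (1 - a^2)) + (\<Sum>i<q-p. (if q \<le> p + i then a^i * a^(p + i - q) else 0)))"
      using g sums_iff_shift[where f="\<lambda>l. (if q \<le> p + l then a^l * a^(p + l - q) else 0)" and n="q-p"] sh by simp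
    moreover have "(\<Sum>i<q-p. (if q \<le> p + i then a^i * a^(p + i - q) else (0::real))) = 0"
      by (intro sum.neutral) auto
    ultimately have "(\<lambda>l. a^l * ip (G a b' (j' * 2^q)) (trig b (j * 2^(p+l)))) sums (a^(q-p) / (1 - a^2))"
      unfolding e by simp
    then show ?thesis using sums_unique2[OF s] True by (simp add: ip_sym)
  next
    case False
    have e: "a^l * ip (G a b' (j' * 2^q)) (trig b (j * 2^(p+l))) = 0" for l
      using False by (auto simp add: ip_G_trig[OF a j j'])
    show ?thesis using sums_unique2[OF s[unfolded e] sums_zero] False by (auto simp add: ip_sym)
  qed
qed

lemma ip_G_G:
  assumes a: "\<bar>a\<bar> < 1" and j: "odd j" and j': "odd j'"
  shows "ip (G a b (j * 2^p)) (G a b' (j' * 2^q)) =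
    (if b = b' \<and> j = j' then a^(if p \<le> q then q-p else p-q) / (1 - a^2) else 0)"
proof (cases "p \<le> q")
  case True then show ?thesis using ip_G_G_le[OF a j j' True] by simp
next
  case False
  then have "q \<le> p" by simp
  then show ?thesis using ip_G_G_le[OF a j' j, of q p b' b] False by (auto simp: ip_sym)
qed

lemma ip_one_G:
  assumes a: "\<bar>a\<bar> < 1" and n: "n \<ge> 1"
  shows "ip (\<lambda>x. 1) (G a b n) = 0"
proof -
  have s: "(\<lambda>l. a^l * ip (\<lambda>x. 1) (trig b (n * 2^l))) sums ip (\<lambda>x. 1) (G a b n)"
    using ip_G[OF a L2_const] .
  have "ip (\<lambda>x. 1) (trig b (n * 2^l)) = 0" for l using n by (intro ip_one_trig) simp
  then show ?thesis using sums_unique2[OF s] by simp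
qed


definition U :: "real \<Rightarrow> bool \<Rightarrow> nat \<Rightarrow> real \<Rightarrow> real" where
  "U a b n x = (if b then ctil a n x else stil a n x)"

definition c1 :: "real \<Rightarrow> nat \<Rightarrow> real" where
  "c1 a p = (if p = 0 then sqrt (1 - a^2) else 1 - a^2)"
definition c2 :: "real \<Rightarrow> nat \<Rightarrow> real" where
  "c2 a p = (if p = 0 then 0 else - a)"

lemma s_sq: "\<bar>a\<bar> < 1 \<Longrightarrow> sqrt (1 - a^2) * sqrt (1 - a^2) = 1 - a^2"
proof -
  assume "\<bar>a\<bar> < 1" then have "a^2 < 1" by (simp add: abs_square_less_1)
  then show ?thesis by simp
qed

lemma s_sq2: "\<bar>a\<bar> < 1 \<Longrightarrow> (sqrt (1 - a^2))^2 = 1 - a^2"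
  by (simp add: abs_square_less_1 less_imp_le)

lemma U_eq:
  assumes a: "\<bar>a\<bar> < 1" and j: "odd j"
  shows "U a b (j * 2^p) = (\<lambda>x. c1 a p * G a b (j * 2^p) x + c2 a p * trig b (j * 2^(p - 1)) x)"
proof (cases "p = 0")
  case True
  then show ?thesis using j
    by (auto simp: fun_eq_iff U_def ctil_def stil_def chat_G shat_G c1_def c2_def trig_def)
next
  case False
  then obtain q where q: "p = Suc q" by (cases p) auto
  have d: "j * 2^p div 2 = j * 2^(p-1)" using q by simp
  have ev: "\<not> odd (j * 2^p)" using q by simp
  show ?thesis using False ev d s_sq[OF a]
    by (auto simp: fun_eq_iff U_def ctil_def stil_def chat_G shat_G c1_def c2_def trig_def
        simp del: power_Suc)
qed

lemma L2_U: assumes a: "\<bar>a\<bar> < 1" and n: "n \<ge> 1" shows "L2_01 (U a b n)"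
proof -
  obtain j p where jp: "odd j" "n = j * 2^p" using odd_decomp[OF n] by blast
  show ?thesis unfolding jp(2) U_eq[OF a jp(1)]
    by (intro L2_add L2_cmul L2_G[OF a] L2_trig)
qed

lemma ip_lin2:
  assumes "L2_01 f" "L2_01 g" "L2_01 u" "L2_01 v"
  shows "ip (\<lambda>x. k1 * f x + k2 * g x) (\<lambda>x. d1 * u x + d2 * v x) =
    k1 * d1 * ip f u + k1 * d2 * ip f v + k2 * d1 * ip g u + k2 * d2 * ip g v"
proof -
  have L: "L2_01 (\<lambda>x. k1 * f x)" "L2_01 (\<lambda>x. k2 * g x)" "L2_01 (\<lambda>x. d1 * u x)" "L2_01 (\<lambda>x. d2 * v x)"
    using assms by (auto intro: L2_cmul)
  show ?thesis
    using assms L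
    by (simp add: ip_add_left ip_add_right L2_add ip_cmul_left ip_cmul_right algebra_simps)
qed

lemma ip_lin1:
  assumes "L2_01 f" "L2_01 u" "L2_01 v"
  shows "ip f (\<lambda>x. d1 * u x + d2 * v x) = d1 * ip f u + d2 * ip f v"
  using assms by (simp add: ip_add_right L2_cmul ip_cmul_right)

lemma UU_arith:
  fixes f1 f2 :: "nat \<Rightarrow> real" and X A s a :: real and p q :: nat
  assumes E: "X = f1 p * f1 q * (a^(if p\<le>q then q-p else p-q) / A)
      + f1 p * f2 q * (if p \<le> q-1 then a^(q-1-p) else 0)
      + f2 p * f1 q * (if q \<le> p-1 then a^(p-1-q) else 0)
      + f2 p * f2 q * (if p - 1 = q - 1 then 1 else 0)"
  and f10: "f1 0 = s" and f20: "f2 0 = 0" and f1p: "\<And>r. r > 0 \<Longrightarrow> f1 r = A" and f2p: "\<And>r. r > 0 \<Longrightarrow> f2 r = - a"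
  and ssA: "s * s = A" and A0: "A \<noteq> 0" and aA: "a * a = 1 - A"
  shows "X = (if p = q then 1 else 0)"
proof -
  consider "p = q" | "p < q" | "q < p" by linarith
  then show ?thesis
  proof cases
    case 1
    show ?thesis
    proof (cases "q = 0")
      case True
      have X: "X = s * s / A" unfolding E using 1 f10 f20 True by simp
      have v: "s * s / A = 1" using ssA A0 by simp
      show ?thesis using X v 1 by simp
    next
      case False
      from False obtain q' where q': "q = Suc q'" by (cases q) auto
      have X: "X = A * A / A + a * a" unfolding E using 1 f1p f2p q' by simp
      have v: "A * A / A + a * a = 1" using aA A0 by simp
      show ?thesis using X v 1 by simp
    qed
  next
    case 2
    define d where "d = q - p - 1"
    have d: "q = p + Suc d" using 2 by (simp add: d_def)
    have pw: "q - p = Suc d" "q - 1 - p = d" using d by auto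
    have q0: "q > 0" using d by simp
    show ?thesis
    proof (cases "p = 0")
      case True
      have X: "X = s * A * (a * a^d / A) + s * (- a) * a^d"
        unfolding E using 2 True f10 f20 f1p[OF q0] f2p[OF q0] pw by simp
      moreover have "X = 0" using X A0 by simp
      ultimately show ?thesis using 2 by simp
    next
      case False
      have X: "X = A * A * (a * a^d / A) + A * (- a) * a^d"
        using False unfolding E using 2 f1p[OF q0] f2p[OF q0] f1p[of p] f2p[of p] pw by auto
      moreover have "X = 0" using X A0 by simp
      ultimately show ?thesis using 2 by simp
    qed
  next
    case 3
    define d where "d = p - q - 1"
    have d: "p = q + Suc d" using 3 by (simp add: d_def)
    have pw: "p - q = Suc d" "p - 1 - q = d" using d by auto
    have p0: "p > 0" using d by simp
    show ?thesis
    proof (cases "q = 0")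
      case True
      have X: "X = A * s * (a * a^d / A) + (- a) * s * a^d"
        unfolding E using 3 True f10 f20 f1p[OF p0] f2p[OF p0] pw by simp
      moreover have "X = 0" using X A0 by simp
      ultimately show ?thesis using 3 by simp
    next
      case False
      have X: "X = A * A * (a * a^d / A) + (- a) * A * a^d"
        using False unfolding E using 3 f1p[OF p0] f2p[OF p0] f1p[of q] f2p[of q] pw by auto
      moreover have "X = 0" using X A0 by simp
      ultimately show ?thesis using 3 by simp
    qed
  qed
qed

lemma ip_UU_jp:
  assumes a: "\<bar>a\<bar> < 1" and j: "odd j" and j': "odd j'"
  shows "ip (U a b (j * 2^p)) (U a b' (j' * 2^q)) = (if b = b' \<and> j = j' \<and> p = q then 1 else 0)"
proof -
  have e: "ip (U a b (j * 2^p)) (U a b' (j' * 2^q)) =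
     c1 a p * c1 a q * ip (G a b (j * 2^p)) (G a b' (j' * 2^q))
   + c1 a p * c2 a q * ip (G a b (j * 2^p)) (trig b' (j' * 2^(q-1)))
   + c2 a p * c1 a q * ip (trig b (j * 2^(p-1))) (G a b' (j' * 2^q))
   + c2 a p * c2 a q * ip (trig b (j * 2^(p-1))) (trig b' (j' * 2^(q-1)))"
    unfolding U_eq[OF a j] U_eq[OF a j'] by (intro ip_lin2 L2_G[OF a] L2_trig)
  have "a^2 < 1" using a by (simp add: abs_square_less_1)
  then have a2: "1 - a^2 \<noteq> 0" by simp
  have ss: "sqrt (1 - a^2) * sqrt (1 - a^2) = 1 - a^2" using s_sq[OF a] .
  show ?thesis
  proof (cases "b = b' \<and> j = j'")
    case False
    then show ?thesis unfolding e
      by (auto simp: ip_G_G[OF a j j'] ip_G_trig[OF a j' j] ip_trig_G[OF a j j']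
          ip_trig[OF odd_pow_pos[OF j] odd_pow_pos[OF j']] odd_eq[OF j j'])
  next
    case True
    then have bb: "b' = b" "j' = j" by auto
    have tt: "ip (trig b (j * 2^(p-1))) (trig b (j * 2^(q-1))) = (if p - 1 = q - 1 then 1 else 0)"
      using odd_pos[OF j] by (simp add: ip_trig[OF odd_pow_pos[OF j] odd_pow_pos[OF j]] odd_eq[OF j j])
    note e' = e[unfolded bb]
    note vals = ip_G_G[OF a j j] ip_G_trig[OF a j j] ip_trig_G[OF a j j] tt
    define A where "A = 1 - a^2"
    define s where "s = sqrt (1 - a^2)"
    have ssA: "s * s = A" using ss by (simp add: A_def s_def)
    have A0: "A \<noteq> 0" using a2 by (simp add: A_def)
    have c10: "c1 a 0 = s" and c20: "c2 a 0 = 0" by (simp_all add: c1_def c2_def s_def)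
    have c1p: "\<And>r. r > 0 \<Longrightarrow> c1 a r = A" and c2p: "\<And>r. r > 0 \<Longrightarrow> c2 a r = - a"
      by (simp_all add: c1_def c2_def A_def)
    have aA: "a * a = 1 - A" by (simp add: A_def power2_eq_square)
    have v1: "ip (G a b (j*2^p)) (G a b (j*2^q)) = a^(if p\<le>q then q-p else p-q) / A"
      by (simp add: ip_G_G[OF a j j] A_def)
    have v2: "ip (G a b (j*2^p)) (trig b (j*2^(q-1))) = (if p \<le> q-1 then a^(q-1-p) else 0)"
      by (simp add: ip_G_trig[OF a j j])
    have v3: "ip (trig b (j*2^(p-1))) (G a b (j*2^q)) = (if q \<le> p-1 then a^(p-1-q) else 0)"
      by (simp add: ip_trig_G[OF a j j])
    have E: "ip (U a b (j * 2^p)) (U a b' (j' * 2^q)) =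
      c1 a p * c1 a q * (a^(if p\<le>q then q-p else p-q) / A)
      + c1 a p * c2 a q * (if p \<le> q-1 then a^(q-1-p) else 0)
      + c2 a p * c1 a q * (if q \<le> p-1 then a^(p-1-q) else 0)
      + c2 a p * c2 a q * (if p - 1 = q - 1 then 1 else 0)"
      unfolding bb e' v1 v2 v3 tt ..
    show ?thesis using UU_arith[OF E c10 c20 c1p c2p ssA A0 aA] bb by simp
  qed
qed

lemma ip_UU:
  assumes a: "\<bar>a\<bar> < 1" and n: "n \<ge> 1" and m: "m \<ge> 1"
  shows "ip (U a b n) (U a b' m) = (if b = b' \<and> n = m then 1 else 0)"
proof -
  obtain j p where jp: "odd j" "n = j * 2^p" using odd_decomp[OF n] by blast
  obtain j' q where jq: "odd j'" "m = j' * 2^q" using odd_decomp[OF m] by blast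
  show ?thesis unfolding jp(2) jq(2) ip_UU_jp[OF a jp(1) jq(1)] odd_eq[OF jp(1) jq(1)] by simp
qed

lemma ip_one_U:
  assumes a: "\<bar>a\<bar> < 1" and n: "n \<ge> 1"
  shows "ip (\<lambda>x. 1) (U a b n) = 0"
proof -
  obtain j p where jp: "odd j" "n = j * 2^p" using odd_decomp[OF n] by blast
  show ?thesis unfolding jp(2) U_eq[OF a jp(1)]
    by (subst ip_lin1) (auto intro!: L2_G[OF a] L2_trig simp: ip_one_G[OF a odd_pow_pos[OF jp(1)]] ip_one_trig[OF odd_pow_pos[OF jp(1)]])
qed

lemma ip_trig_U_jp:
  assumes a: "\<bar>a\<bar> < 1" and j: "odd j" and j': "odd j'"
  shows "ip (trig b (j * 2^M)) (U a b' (j' * 2^p)) =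
    (if b = b' \<and> j = j' then c1 a p * (if p \<le> M then a^(M-p) else 0) + c2 a p * (if p = Suc M then 1 else 0) else 0)"
proof -
  have e: "ip (trig b (j * 2^M)) (U a b' (j' * 2^p)) =
     c1 a p * ip (trig b (j * 2^M)) (G a b' (j' * 2^p)) + c2 a p * ip (trig b (j * 2^M)) (trig b' (j' * 2^(p-1)))"
    unfolding U_eq[OF a j'] by (intro ip_lin1 L2_G[OF a] L2_trig)
  show ?thesis unfolding e ip_trig_G[OF a j j']
    by (auto simp: ip_trig[OF odd_pow_pos[OF j] odd_pow_pos[OF j']] odd_eq[OF j j'] c2_def)
qed


definition val :: "real \<Rightarrow> nat \<Rightarrow> nat \<Rightarrow> real" where
  "val a M p = c1 a p * (if p \<le> M then a^(M-p) else 0) + c2 a p * (if p = Suc M then 1 else 0)"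

lemma val_big: "p > Suc M \<Longrightarrow> val a M p = 0"
  by (simp add: val_def c2_def)

lemma sum_c1_sq:
  assumes a: "\<bar>a\<bar> < 1"
  shows "(\<Sum>p\<le>M. (c1 a p * a^(M-p))^2) = 1 - a^2"
proof (induction M)
  case 0
  then show ?case using s_sq2[OF a] by (simp add: c1_def)
next
  case (Suc M)
  have "(\<Sum>p\<le>Suc M. (c1 a p * a^(Suc M-p))^2) = (\<Sum>p\<le>M. (c1 a p * a^(Suc M-p))^2) + (c1 a (Suc M))^2"
    by simp
  also have "(\<Sum>p\<le>M. (c1 a p * a^(Suc M-p))^2) = (\<Sum>p\<le>M. a^2 * (c1 a p * a^(M-p))^2)"
  proof (rule sum.cong)
    fix p assume "p \<in> {..M}"
    then have "Suc M - p = Suc (M - p)" by auto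
    then show "(c1 a p * a^(Suc M-p))^2 = a^2 * (c1 a p * a^(M-p))^2"
      by (simp add: power_mult_distrib power2_eq_square)
  qed simp
  also have "\<dots> = a^2 * (1 - a^2)" using Suc by (simp add: sum_distrib_left[symmetric])
  finally show ?case by (simp add: c1_def power2_eq_square algebra_simps)
qed

lemma sum_val_sq:
  assumes a: "\<bar>a\<bar> < 1"
  shows "(\<Sum>p\<le>Suc M. (val a M p)^2) = 1"
proof -
  have "(\<Sum>p\<le>Suc M. (val a M p)^2) = (\<Sum>p\<le>M. (val a M p)^2) + (val a M (Suc M))^2" by simp
  also have "(\<Sum>p\<le>M. (val a M p)^2) = (\<Sum>p\<le>M. (c1 a p * a^(M-p))^2)"
    by (rule sum.cong) (auto simp: val_def)
  also have "val a M (Suc M) = - a" by (simp add: val_def c2_def)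
  finally show ?thesis using sum_c1_sq[OF a] by simp
qed

definition wsum :: "real \<Rightarrow> (real \<Rightarrow> real) \<Rightarrow> nat \<Rightarrow> real" where
  "wsum a e n = (ip e (U a True n))^2 + (ip e (U a False n))^2"

lemma parseval_trig:
  assumes a: "\<bar>a\<bar> < 1" and k: "k \<ge> 1" and N: "N \<ge> 2 * k"
  shows "(\<Sum>n\<in>{1..N}. wsum a (trig b k) n) = 1"
proof -
  obtain j M where jM: "odd j" "k = j * 2^M" using odd_decomp[OF k] by blast
  have j: "odd j" by (rule jM(1))
  define T where "T = (\<lambda>p. j * 2^p) ` {..Suc M}"
  have w1: "wsum a (trig b k) (j * 2^p) = (val a M p)^2" for p
    unfolding wsum_def jM(2) ip_trig_U_jp[OF a j j] val_def by (cases b) auto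
  have w0: "wsum a (trig b k) n = 0" if "n \<in> {1..N} - T" for n
  proof -
    from that have n1: "n \<ge> 1" by auto
    obtain j' p where jp: "odd j'" "n = j' * 2^p" using odd_decomp[OF n1] by blast
    show ?thesis
    proof (cases "j' = j")
      case True
      then have "p > Suc M" using that jp unfolding T_def by (auto simp: not_le[symmetric])
      then show ?thesis using w1[of p] jp True val_big by simp
    next
      case False
      then show ?thesis unfolding wsum_def jM(2) jp(2) ip_trig_U_jp[OF a j jp(1)] by simp
    qed
  qed
  have TN: "T \<subseteq> {1..N}"
  proof
    fix n assume "n \<in> T"
    then obtain p where p: "p \<le> Suc M" "n = j * 2^p" unfolding T_def by auto
    have "j * 2^p \<le> j * 2^(Suc M)" using p(1) by (intro mult_left_mono power_increasing) auto
    also have "\<dots> = 2 * k" using jM(2) by simp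
    finally show "n \<in> {1..N}" using p N odd_pow_pos[OF j, of p] by auto
  qed
  have "(\<Sum>n\<in>{1..N}. wsum a (trig b k) n) = (\<Sum>n\<in>T. wsum a (trig b k) n)"
    by (rule sum.mono_neutral_right[OF _ TN]) (use w0 in auto)
  also have "\<dots> = (\<Sum>p\<le>Suc M. wsum a (trig b k) (j * 2^p))"
    unfolding T_def by (rule sum.reindex_cong[where l="\<lambda>p. j * 2^p"]) (use odd_pos[OF j] in \<open>auto simp: inj_on_def odd_eq[OF j j]\<close>)
  also have "\<dots> = 1" unfolding w1 using sum_val_sq[OF a] .
  finally show ?thesis .
qed

lemma parseval_one:
  assumes a: "\<bar>a\<bar> < 1"
  shows "(\<Sum>n\<in>{1..N}. wsum a (\<lambda>x. 1) n) = 0"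
  by (rule sum.neutral) (auto simp: wsum_def ip_one_U[OF a])

lemma ip_trig_one: "k \<ge> 1 \<Longrightarrow> ip (trig b k) (\<lambda>x. 1) = 0"
  using ip_one_trig by (simp add: ip_sym)


lemma ip_self_sum:
  assumes "finite I" "\<And>i. i \<in> I \<Longrightarrow> L2_01 (u i)"
  shows "ip (\<lambda>x. \<Sum>i\<in>I. c i * u i x) (\<lambda>x. \<Sum>i\<in>I. c i * u i x) = (\<Sum>i\<in>I. \<Sum>j\<in>I. c i * c j * ip (u i) (u j))"
proof -
  have L: "\<And>i. i \<in> I \<Longrightarrow> L2_01 (\<lambda>x. c i * u i x)" using assms(2) L2_cmul by blast
  have LS: "L2_01 (\<lambda>x. \<Sum>i\<in>I. c i * u i x)" using L2_sum[OF assms(1) L] .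
  have "ip (\<lambda>x. \<Sum>i\<in>I. c i * u i x) (\<lambda>x. \<Sum>i\<in>I. c i * u i x) = (\<Sum>i\<in>I. ip (\<lambda>x. c i * u i x) (\<lambda>x. \<Sum>j\<in>I. c j * u j x))"
    by (rule ip_sum_left[OF assms(1) L LS])
  also have "\<dots> = (\<Sum>i\<in>I. \<Sum>j\<in>I. c i * c j * ip (u i) (u j))"
  proof (rule sum.cong[OF refl])
    fix i assume i: "i \<in> I"
    have "ip (\<lambda>x. c i * u i x) (\<lambda>x. \<Sum>j\<in>I. c j * u j x) = (\<Sum>j\<in>I. ip (\<lambda>x. c i * u i x) (\<lambda>x. c j * u j x))"
      by (rule ip_sum_right[OF assms(1) L L[OF i]])
    then show "ip (\<lambda>x. c i * u i x) (\<lambda>x. \<Sum>j\<in>I. c j * u j x) = (\<Sum>j\<in>I. c i * c j * ip (u i) (u j))"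
      by (simp add: ip_cmul_left ip_cmul_right mult.assoc)
  qed
  finally show ?thesis .
qed

lemma proj_identity:
  assumes fin: "finite I" and L: "\<And>i. i \<in> I \<Longrightarrow> L2_01 (u i)"
    and on: "\<And>i j. i \<in> I \<Longrightarrow> j \<in> I \<Longrightarrow> ip (u i) (u j) = (if i = j then 1 else 0)"
    and f: "L2_01 f"
  shows "ip (\<lambda>x. f x - (\<Sum>i\<in>I. ip f (u i) * u i x)) (\<lambda>x. f x - (\<Sum>i\<in>I. ip f (u i) * u i x))
     = ip f f - (\<Sum>i\<in>I. (ip f (u i))^2)"
proof -
  define P where "P x = (\<Sum>i\<in>I. ip f (u i) * u i x)" for x
  have Lc: "\<And>i. i \<in> I \<Longrightarrow> L2_01 (\<lambda>x. ip f (u i) * u i x)" using L L2_cmul by blast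
  have LP: "L2_01 P" unfolding P_def using L2_sum[OF fin Lc] .
  have PP: "ip P P = (\<Sum>i\<in>I. (ip f (u i))^2)"
  proof -
    have "ip P P = (\<Sum>i\<in>I. \<Sum>j\<in>I. ip f (u i) * ip f (u j) * ip (u i) (u j))"
      unfolding P_def by (rule ip_self_sum[OF fin L])
    also have "\<dots> = (\<Sum>i\<in>I. (ip f (u i))^2)"
    proof (rule sum.cong[OF refl])
      fix i assume i: "i \<in> I"
      have "(\<Sum>j\<in>I. ip f (u i) * ip f (u j) * ip (u i) (u j)) = (\<Sum>j\<in>I. if j = i then ip f (u i) * ip f (u j) else 0)"
        by (rule sum.cong) (auto simp: on[OF i])
      also have "\<dots> = (ip f (u i))^2" using i fin by (simp add: power2_eq_square)
      finally show "(\<Sum>j\<in>I. ip f (u i) * ip f (u j) * ip (u i) (u j)) = (ip f (u i))^2" .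
    qed
    finally show ?thesis .
  qed
  have fP: "ip f P = (\<Sum>i\<in>I. (ip f (u i))^2)"
  proof -
    have "ip f P = (\<Sum>i\<in>I. ip f (\<lambda>x. ip f (u i) * u i x))"
      unfolding P_def by (rule ip_sum_right[OF fin Lc f])
    then show ?thesis by (simp add: ip_cmul_right power2_eq_square)
  qed
  have "ip (\<lambda>x. f x - P x) (\<lambda>x. f x - P x) = ip f f - ip f P - ip P f + ip P P"
    using f LP by (simp add: ip_diff_left ip_diff_right L2_diff)
  also have "\<dots> = ip f f - (\<Sum>i\<in>I. (ip f (u i))^2)" using PP fP by (simp add: ip_sym[of P f])
  finally show ?thesis unfolding P_def .
qed

definition Ix :: "nat \<Rightarrow> (nat \<times> bool) set" where
  "Ix N = insert (0, True) ({1..N} \<times> UNIV)"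

definition uf :: "real \<Rightarrow> nat \<times> bool \<Rightarrow> real \<Rightarrow> real" where
  "uf a i = (if fst i = 0 then (\<lambda>x. 1) else U a (snd i) (fst i))"

lemma fin_Ix: "finite (Ix N)" by (simp add: Ix_def)

lemma L2_uf: "\<bar>a\<bar> < 1 \<Longrightarrow> i \<in> Ix N \<Longrightarrow> L2_01 (uf a i)"
  by (auto simp: Ix_def uf_def intro: L2_U)

lemma on_uf: "\<bar>a\<bar> < 1 \<Longrightarrow> i \<in> Ix N \<Longrightarrow> j \<in> Ix N \<Longrightarrow> ip (uf a i) (uf a j) = (if i = j then 1 else 0)"
  by (auto simp: Ix_def uf_def ip_UU ip_one_U ip_one_one ip_sym[of "U a _ _" "\<lambda>x. 1"] prod_eq_iff)

definition PN :: "real \<Rightarrow> nat \<Rightarrow> (real \<Rightarrow> real) \<Rightarrow> real \<Rightarrow> real" where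
  "PN a N f x = (\<Sum>i\<in>Ix N. ip f (uf a i) * uf a i x)"

definition EN :: "real \<Rightarrow> nat \<Rightarrow> (real \<Rightarrow> real) \<Rightarrow> real" where
  "EN a N f = ip (\<lambda>x. f x - PN a N f x) (\<lambda>x. f x - PN a N f x)"

lemma EN_eq: "\<bar>a\<bar> < 1 \<Longrightarrow> L2_01 f \<Longrightarrow> EN a N f = ip f f - (\<Sum>i\<in>Ix N. (ip f (uf a i))^2)"
  unfolding EN_def PN_def by (rule proj_identity[OF fin_Ix L2_uf on_uf]) auto

lemma EN_nonneg: "0 \<le> EN a N f" unfolding EN_def by (rule ip_nonneg)

lemma EN_le: "\<bar>a\<bar> < 1 \<Longrightarrow> L2_01 f \<Longrightarrow> EN a N f \<le> ip f f"
  by (simp add: EN_eq sum_nonneg)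

lemma sum_Ix: "(\<Sum>i\<in>Ix N. F i) = F (0, True) + (\<Sum>n\<in>{1..N}. F (n, True) + F (n, False))"
proof -
  have "(\<Sum>i\<in>Ix N. F i) = F (0, True) + (\<Sum>i\<in>{1..N} \<times> UNIV. F i)"
    unfolding Ix_def by (subst sum.insert) auto
  also have "(\<Sum>i\<in>{1..N} \<times> UNIV. F i) = (\<Sum>n\<in>{1..N}. \<Sum>b\<in>UNIV. F (n, b))"
    by (rule sum.cartesian_product')
  also have "\<dots> = (\<Sum>n\<in>{1..N}. F (n, True) + F (n, False))"
    by (simp add: UNIV_bool add.commute)
  finally show ?thesis .
qed

lemma sumsq_Ix: "(\<Sum>i\<in>Ix N. (ip e (uf a i))^2) = (ip e (\<lambda>x. 1))^2 + (\<Sum>n\<in>{1..N}. wsum a e n)"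
  unfolding sum_Ix by (simp add: uf_def wsum_def)

lemma EN_trig: "\<bar>a\<bar> < 1 \<Longrightarrow> k \<ge> 1 \<Longrightarrow> N \<ge> 2 * k \<Longrightarrow> EN a N (trig b k) = 0"
  using EN_eq[OF _ L2_trig] sumsq_Ix parseval_trig ip_trig ip_trig_one by simp

lemma EN_one: "\<bar>a\<bar> < 1 \<Longrightarrow> EN a N (\<lambda>x. 1) = 0"
  using EN_eq[OF _ L2_const] sumsq_Ix parseval_one ip_one_one by simp

lemma PN_lin: "\<bar>a\<bar> < 1 \<Longrightarrow> L2_01 f \<Longrightarrow> L2_01 g \<Longrightarrow> PN a N (\<lambda>x. c * f x + d * g x) x = c * PN a N f x + d * PN a N g x"
  unfolding PN_def
  by (simp add: ip_add_left L2_cmul L2_uf fin_Ix ip_cmul_left sum.distrib sum_distrib_left algebra_simps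
      cong: sum.cong)

lemma L2_PN: "\<bar>a\<bar> < 1 \<Longrightarrow> L2_01 (PN a N f)"
  unfolding PN_def by (intro L2_sum fin_Ix L2_cmul L2_uf)

lemma ip_sq_add_le: "L2_01 R \<Longrightarrow> L2_01 Q \<Longrightarrow> ip (\<lambda>x. R x + Q x) (\<lambda>x. R x + Q x) \<le> 2 * ip R R + 2 * ip Q Q"
proof -
  assume R: "L2_01 R" and Q: "L2_01 Q"
  have "0 \<le> ip (\<lambda>x. R x - Q x) (\<lambda>x. R x - Q x)" by (rule ip_nonneg)
  moreover have "ip (\<lambda>x. R x - Q x) (\<lambda>x. R x - Q x) = ip R R - 2 * ip R Q + ip Q Q"
    using R Q by (simp add: ip_diff_left ip_diff_right L2_diff ip_sym[of Q R])
  moreover have "ip (\<lambda>x. R x + Q x) (\<lambda>x. R x + Q x) = ip R R + 2 * ip R Q + ip Q Q"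
    using R Q by (simp add: ip_add_left ip_add_right L2_add ip_sym[of Q R])
  ultimately show ?thesis by linarith
qed

lemma EN_add_le:
  assumes a: "\<bar>a\<bar> < 1" and f: "L2_01 f" and g: "L2_01 g"
  shows "EN a N (\<lambda>x. f x + g x) \<le> 2 * EN a N f + 2 * EN a N g"
proof -
  have e: "(\<lambda>x. (f x + g x) - PN a N (\<lambda>x. f x + g x) x) = (\<lambda>x. (f x - PN a N f x) + (g x - PN a N g x))"
    using PN_lin[OF a f g, where c=1 and d=1 and N=N] by auto
  show ?thesis unfolding EN_def e
    by (rule ip_sq_add_le) (intro L2_diff f g L2_PN a)+
qed

lemma EN_cmul:
  assumes a: "\<bar>a\<bar> < 1" and f: "L2_01 f"
  shows "EN a N (\<lambda>x. c * f x) = c^2 * EN a N f"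
proof -
  have e: "(\<lambda>x. c * f x - PN a N (\<lambda>x. c * f x) x) = (\<lambda>x. c * (f x - PN a N f x))"
    using PN_lin[OF a f f, where c=c and d=0 and N=N] by (auto simp: algebra_simps)
  show ?thesis unfolding EN_def e by (simp add: ip_cmul_left ip_cmul_right power2_eq_square)
qed


inductive TP :: "(real \<Rightarrow> real) \<Rightarrow> bool" where
  TPc: "TP (\<lambda>x. c * trig b k x)"
| TPone: "TP (\<lambda>x. c)"
| TPadd: "TP f \<Longrightarrow> TP g \<Longrightarrow> TP (\<lambda>x. f x + g x)"

lemma TP_cont: "TP f \<Longrightarrow> continuous_on S f"
  by (induction rule: TP.induct) (auto intro!: continuous_intros cont_trig)

lemma TP_L2: "TP f \<Longrightarrow> L2_01 f"
  using TP_cont L2_cont by blast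

lemma TP_cmul: "TP f \<Longrightarrow> TP (\<lambda>x. d * f x)"
proof (induction rule: TP.induct)
  case (TPc c b k)
  then show ?case using TP.TPc[of "d * c" b k] by (simp add: mult.assoc)
next
  case (TPone c)
  then show ?case using TP.TPone[of "d * c"] by simp
next
  case (TPadd f g)
  then show ?case using TP.TPadd[OF TPadd.IH] by (simp add: distrib_left)
qed

lemma TP_eq: "TP f \<Longrightarrow> (\<And>x. f x = g x) \<Longrightarrow> TP g"
proof -
  assume "TP f" "\<And>x. f x = g x"
  then have "f = g" by auto
  then show "TP g" using \<open>TP f\<close> by simp
qed

lemma TP_cos_int: "TP (\<lambda>x. cos (2 * pi * of_int z * x))"
proof -
  obtain n :: nat where n: "z = int n \<or> z = - int n" by (metis int_cases2)
  have "cos (2 * pi * of_int z * x) = (1 / sqrt 2) * trig True n x" for x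
    using n by (auto simp: trig_def cfun_def algebra_simps)
  then show ?thesis using TP_eq[OF TPc[of "1 / sqrt 2" True n]] by metis
qed

lemma TP_sin_int: "TP (\<lambda>x. sin (2 * pi * of_int z * x))"
proof -
  obtain n :: nat where n: "z = int n \<or> z = - int n" by (metis int_cases2)
  show ?thesis
  proof (cases "z = int n")
    case True
    have "sin (2 * pi * of_int z * x) = (1 / sqrt 2) * trig False n x" for x
      using True by (auto simp: trig_def sfun_def algebra_simps)
    then show ?thesis using TP_eq[OF TPc[of "1 / sqrt 2" False n]] by metis
  next
    case False
    then have z: "z = - int n" using n by auto
    have "sin (2 * pi * of_int z * x) = (- 1 / sqrt 2) * trig False n x" for x
      using z by (auto simp: trig_def sfun_def algebra_simps)
    then show ?thesis using TP_eq[OF TPc[of "- 1 / sqrt 2" False n]] by metis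
  qed
qed

lemma TP_trig_mult: "TP (\<lambda>x. trig b k x * trig b' m x)"
proof -
  define A where "A x = 2 * real k * pi * x" for x
  define B where "B x = 2 * real m * pi * x" for x
  have d: "A x - B x = 2 * pi * of_int (int k - int m) * x" for x unfolding A_def B_def by (rule ang_diff)
  have s: "A x + B x = 2 * pi * of_int (int k + int m) * x" for x unfolding A_def B_def by (rule ang_add)
  have Cd: "TP (\<lambda>x. cos (A x - B x))" unfolding d by (rule TP_cos_int)
  have Cs: "TP (\<lambda>x. cos (A x + B x))" unfolding s by (rule TP_cos_int)
  have Sd: "TP (\<lambda>x. sin (A x - B x))" unfolding d by (rule TP_sin_int)
  have Ss: "TP (\<lambda>x. sin (A x + B x))" unfolding s by (rule TP_sin_int)
  have mCd: "TP (\<lambda>x. - cos (A x - B x))" using TP_cmul[OF Cd, of "-1"] by simp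
  have mCs: "TP (\<lambda>x. - cos (A x + B x))" using TP_cmul[OF Cs, of "-1"] by simp
  have mSd: "TP (\<lambda>x. - sin (A x - B x))" using TP_cmul[OF Sd, of "-1"] by simp
  have cc: "cfun k x * cfun m x = cos (A x - B x) + cos (A x + B x)" for x
    unfolding cfun_def A_def[symmetric] B_def[symmetric] cos_diff cos_add by (simp add: algebra_simps)
  have ss: "sfun k x * sfun m x = cos (A x - B x) + - cos (A x + B x)" for x
    unfolding sfun_def A_def[symmetric] B_def[symmetric] cos_diff cos_add by (simp add: algebra_simps)
  have cs: "cfun k x * sfun m x = sin (A x + B x) + - sin (A x - B x)" for x
    unfolding cfun_def sfun_def A_def[symmetric] B_def[symmetric] sin_diff sin_add by (simp add: algebra_simps)
  have sc: "sfun k x * cfun m x = sin (A x + B x) + sin (A x - B x)" for x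
    unfolding cfun_def sfun_def A_def[symmetric] B_def[symmetric] sin_diff sin_add by (simp add: algebra_simps)
  show ?thesis
  proof (cases b; cases b')
    assume "b" "b'" then show ?thesis unfolding trig_def using TP_eq[OF TPadd[OF Cd Cs]] cc by simp
  next
    assume "b" "\<not> b'" then show ?thesis unfolding trig_def using TP_eq[OF TPadd[OF Ss mSd]] cs by simp
  next
    assume "\<not> b" "b'" then show ?thesis unfolding trig_def using TP_eq[OF TPadd[OF Ss Sd]] sc by simp
  next
    assume "\<not> b" "\<not> b'" then show ?thesis unfolding trig_def using TP_eq[OF TPadd[OF Cd mCs]] ss by simp
  qed
qed

lemma TP_mult: "TP f \<Longrightarrow> TP g \<Longrightarrow> TP (\<lambda>x. f x * g x)"
proof (induction arbitrary: g rule: TP.induct)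
  case (TPc c b k)
  from TPc.prems show ?case
  proof (induction rule: TP.induct)
    case (TPc d b' m)
    have "TP (\<lambda>x. (c * d) * (trig b k x * trig b' m x))" by (rule TP_cmul[OF TP_trig_mult])
    then show ?case by (rule TP_eq) (simp add: algebra_simps)
  next
    case (TPone d)
    show ?case using TP.TPc[of "c * d" b k] by (rule TP_eq) (simp add: algebra_simps)
  next
    case (TPadd g1 g2)
    show ?case using TP.TPadd[OF TPadd.IH] by (rule TP_eq) (simp add: algebra_simps)
  qed
next
  case (TPone c)
  then show ?case using TP_cmul by blast
next
  case (TPadd f1 f2)
  show ?case using TP.TPadd[OF TPadd.IH(1)[OF TPadd.prems] TPadd.IH(2)[OF TPadd.prems]]
    by (rule TP_eq) (simp add: algebra_simps)
qed

lemma trig0: "trig b 0 x = (if b then sqrt 2 else 0) * 1"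
  by (simp add: trig_def cfun_def sfun_def)

lemma TP_EN:
  assumes a: "\<bar>a\<bar> < 1"
  shows "TP f \<Longrightarrow> \<exists>N0. \<forall>N\<ge>N0. EN a N f = 0"
proof (induction rule: TP.induct)
  case (TPc c b k)
  show ?case
  proof (cases "k = 0")
    case True
    have "EN a N (\<lambda>x. c * trig b k x) = 0" for N
      using EN_cmul[OF a L2_const, of N "c * (if b then sqrt 2 else 0)" 1] EN_one[OF a, of N]
      unfolding True trig0 by (simp add: mult.assoc)
    then show ?thesis by blast
  next
    case False
    then have "EN a N (\<lambda>x. c * trig b k x) = 0" if "N \<ge> 2 * k" for N
      using EN_cmul[OF a L2_trig] EN_trig[OF a _ that] by simp
    then show ?thesis by blast
  qed
next
  case (TPone c)
  have "EN a N (\<lambda>x. c) = 0" for N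
    using EN_cmul[OF a L2_const, of N c 1] EN_one[OF a, of N] by simp
  then show ?case by blast
next
  case (TPadd f g)
  then obtain N1 N2 where N1: "\<forall>N\<ge>N1. EN a N f = 0" and N2: "\<forall>N\<ge>N2. EN a N g = 0" by blast
  have "EN a N (\<lambda>x. f x + g x) = 0" if "N \<ge> max N1 N2" for N
    using EN_add_le[OF a TP_L2[OF TPadd.hyps(1)] TP_L2[OF TPadd.hyps(2)], of N] N1 N2 that
      EN_nonneg[of a N "\<lambda>x. f x + g x"] by auto
  then show ?case by blast
qed


definition param :: "real \<Rightarrow> real \<times> real" where
  "param t = (cos (2 * pi * t), sin (2 * pi * t))"

lemma cont_param: "continuous_on A param"
  unfolding param_def by (intro continuous_intros)

lemma param_eq:
  assumes x: "x \<in> I01" and y: "y \<in> I01" and e: "param x = param y"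
  shows "x = y \<or> (x = 0 \<and> y = 1) \<or> (x = 1 \<and> y = 0)"
proof -
  from e have "sin (2 * pi * x) = sin (2 * pi * y) \<and> cos (2 * pi * x) = cos (2 * pi * y)"
    by (simp add: param_def)
  then obtain n :: int where n: "2 * pi * x = 2 * pi * y + 2 * pi * n" using sin_cos_eq_iff by blast
  then have "2 * pi * x = 2 * pi * (y + n)" by (simp add: algebra_simps)
  then have xn: "x = y + n" by simp
  have "-1 \<le> real_of_int n" "real_of_int n \<le> 1" using x y xn by auto
  then have "n = -1 \<or> n = 0 \<or> n = 1" by linarith
  then show ?thesis using x y xn by auto
qed

lemma lift_circle:
  fixes Gc :: "real \<Rightarrow> real"
  assumes Gc: "continuous_on I01 Gc" and Gc01: "Gc 0 = Gc 1"
  obtains F where "continuous_on (param ` I01) F" "\<And>t. t \<in> I01 \<Longrightarrow> F (param t) = Gc t"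
proof -
  define S where "S = param ` I01"
  have cS: "compact S" unfolding S_def by (intro compact_continuous_image cont_param) auto
  have q: "quotient_map (top_of_set I01) (top_of_set S) param"
  proof (rule continuous_closed_imp_quotient_map)
    show cm: "continuous_map (top_of_set I01) (top_of_set S) param"
      using cont_param by (auto simp: S_def)
    show "closed_map (top_of_set I01) (top_of_set S) param"
    proof (rule continuous_imp_closed_map[OF cm])
      show "compact_space (top_of_set I01)"
        by (intro compact_space_subtopology) (simp add: compactin_euclidean_iff)
      show "Hausdorff_space (top_of_set S)"
        by (intro Hausdorff_space_subtopology Hausdorff_space_euclidean)
    qed
    show "param ` topspace (top_of_set I01) = topspace (top_of_set S)" by (simp add: S_def)
  qed
  have h: "continuous_map (top_of_set I01) euclideanreal Gc" using Gc by simp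
  have eqc: "Gc x = Gc y" if "x \<in> topspace (top_of_set I01)" "y \<in> topspace (top_of_set I01)" "param x = param y" for x y
    using that param_eq[of x y] Gc01 by auto
  obtain g where g: "continuous_map (top_of_set S) euclideanreal g"
    and gim: "g ` topspace (top_of_set S) = Gc ` topspace (top_of_set I01)"
    and gG: "\<And>x. x \<in> topspace (top_of_set I01) \<Longrightarrow> g (param x) = Gc x"
    by (rule quotient_map_lift_exists[OF q h eqc]) auto
  show ?thesis
  proof
    show "continuous_on (param ` I01) g" using g by (simp add: S_def)
    show "\<And>t. t \<in> I01 \<Longrightarrow> g (param t) = Gc t" using gG by simp
  qed
qed

lemma TP_fst_param: "TP (\<lambda>t. fst (param t))"
  using TP_eq[OF TPc[of "1 / sqrt 2" True 1]] by (simp add: param_def trig_def cfun_def algebra_simps)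

lemma TP_snd_param: "TP (\<lambda>t. snd (param t))"
  using TP_eq[OF TPc[of "1 / sqrt 2" False 1]] by (simp add: param_def trig_def sfun_def algebra_simps)

lemma trig_approx:
  fixes Gc :: "real \<Rightarrow> real"
  assumes Gc: "continuous_on I01 Gc" and Gc01: "Gc 0 = Gc 1" and e: "e > 0"
  obtains q where "TP q" "\<And>t. t \<in> I01 \<Longrightarrow> \<bar>Gc t - q t\<bar> < e"
proof -
  obtain F where F: "continuous_on (param ` I01) F" and FG: "\<And>t. t \<in> I01 \<Longrightarrow> F (param t) = Gc t"
    using lift_circle[OF Gc Gc01] by blast
  define P where "P f \<longleftrightarrow> continuous_on (param ` I01) f \<and> TP (\<lambda>t. f (param t))" for f :: "real \<times> real \<Rightarrow> real"
  have "\<exists>g. P g \<and> (\<forall>z\<in>param ` I01. \<bar>F z - g z\<bar> < e)"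
  proof (rule Stone_Weierstrass_HOL[OF _ _ _ _ _ _ F e])
    show "compact (param ` I01)" by (intro compact_continuous_image cont_param) auto
    show "P (\<lambda>x. c)" for c by (simp add: P_def TPone)
    show "P f \<Longrightarrow> continuous_on (param ` I01) f" for f by (simp add: P_def)
    show "P f \<and> P g \<Longrightarrow> P (\<lambda>x. f x + g x)" for f g
      unfolding P_def by (intro conjI continuous_on_add TPadd) auto
    show "P f \<and> P g \<Longrightarrow> P (\<lambda>x. f x * g x)" for f g
      unfolding P_def by (intro conjI continuous_on_mult TP_mult) auto
    show "\<exists>f. P f \<and> f x \<noteq> f y" if "x \<in> param ` I01 \<and> y \<in> param ` I01 \<and> x \<noteq> y" for x y
    proof (cases "fst x = fst y")
      case True
      then have "snd x \<noteq> snd y" using that prod_eq_iff by blast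
      moreover have "P snd" unfolding P_def using TP_snd_param continuous_on_snd[OF continuous_on_id] by auto
      ultimately show ?thesis by blast
    next
      case False
      moreover have "P fst" unfolding P_def using TP_fst_param continuous_on_fst[OF continuous_on_id] by auto
      ultimately show ?thesis by blast
    qed
  qed
  then obtain g where g: "P g" "\<And>z. z \<in> param ` I01 \<Longrightarrow> \<bar>F z - g z\<bar> < e" by blast
  have A: "TP (\<lambda>t. g (param t))" using g(1) by (simp add: P_def)
  have B: "\<bar>Gc t - g (param t)\<bar> < e" if "t \<in> I01" for t
  proof -
    have m: "param t \<in> param ` I01" using that by (rule imageI)
    have "\<bar>F (param t) - g (param t)\<bar> < e" by (rule g(2)[OF m])
    then show ?thesis using FG[OF that] by simp
  qed
  show ?thesis by (rule that[OF A B])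
qed


definition clampf :: "real \<Rightarrow> real \<Rightarrow> real" where
  "clampf M y = max (- M) (min M y)"

lemma clampf_cont: "continuous_on S (clampf M)"
  unfolding clampf_def by (intro continuous_intros)

lemma clampf_bound: "0 \<le> M \<Longrightarrow> \<bar>clampf M y\<bar> \<le> M"
  unfolding clampf_def by auto

lemma clampf_id: "\<bar>y\<bar> \<le> M \<Longrightarrow> clampf M y = y"
  unfolding clampf_def by auto

lemma clampf_le: "0 \<le> M \<Longrightarrow> \<bar>y - clampf M y\<bar> \<le> \<bar>y\<bar>"
  unfolding clampf_def by auto

lemma mo_clampf: "f measurable_on I01 \<Longrightarrow> (\<lambda>x. clampf M (f x)) measurable_on I01"
  unfolding mo_iff clampf_def by (auto intro!: borel_measurable_max borel_measurable_min)

lemma trunc_approx: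
  assumes h: "L2_01 h" and e: "\<epsilon> > 0"
  obtains M where "M \<ge> 0" "ip (\<lambda>x. h x - clampf M (h x)) (\<lambda>x. h x - clampf M (h x)) < \<epsilon>"
proof -
  define D where "D n x = (h x - clampf (real n) (h x))^2" for n x
  have hm: "h measurable_on I01" using L2_meas[OF h] .
  have Lt: "L2_01 (\<lambda>x. clampf (real n) (h x))" for n
    by (rule L2_bounded[OF mo_clampf[OF hm]]) (rule clampf_bound, simp)
  have Di: "D n integrable_on I01" for n
    unfolding D_def using L2_sq[OF L2_diff[OF h Lt]] by simp
  have Db: "norm (D n x) \<le> (h x)^2" for n x
  proof -
    have "\<bar>h x - clampf (real n) (h x)\<bar>^2 \<le> \<bar>h x\<bar>^2" by (intro power_mono clampf_le) auto
    then show ?thesis by (simp add: D_def)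
  qed
  have Dc: "(\<lambda>n. D n x) \<longlonglongrightarrow> 0" for x
  proof (rule tendsto_eventually)
    obtain n0 :: nat where n0: "\<bar>h x\<bar> \<le> real n0" using real_arch_simple by blast
    show "\<forall>\<^sub>F n in sequentially. D n x = 0"
      unfolding eventually_sequentially
    proof (rule exI[of _ n0], intro allI impI)
      fix n assume "n0 \<le> n"
      then have "\<bar>h x\<bar> \<le> real n" using n0 by linarith
      then show "D n x = 0" by (simp add: D_def clampf_id)
    qed
  qed
  have lim: "(\<lambda>n. integral I01 (D n)) \<longlonglongrightarrow> integral I01 (\<lambda>x. 0)"
    by (rule dominated_convergence(2)[OF Di L2_sq[OF h] Db Dc])
  then have "\<forall>\<^sub>F n in sequentially. integral I01 (D n) < \<epsilon>"
    using e by (simp add: order_tendstoD(2))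
  then obtain n where "integral I01 (D n) < \<epsilon>" by (meson eventually_sequentially order_refl)
  moreover have "D n = (\<lambda>x. (h x - clampf (real n) (h x))^2)" by (simp add: fun_eq_iff D_def)
  ultimately have "ip (\<lambda>x. h x - clampf (real n) (h x)) (\<lambda>x. h x - clampf (real n) (h x)) < \<epsilon>"
    by (simp add: sq_int[symmetric])
  then show ?thesis using that[of "real n"] by simp
qed

definition phi :: "nat \<Rightarrow> real \<Rightarrow> real" where
  "phi n x = max 0 (min 1 (min (real n * x) (real n * (1 - x))))"

lemma phi_cont: "continuous_on S (phi n)"
  unfolding phi_def by (intro continuous_intros)

lemma phi_01: "0 \<le> phi n x" "phi n x \<le> 1" unfolding phi_def by auto

lemma phi_ends: "phi n 0 = 0" "phi n 1 = 0" unfolding phi_def by auto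

lemma phi_lim:
  assumes "0 < x" "x < 1"
  shows "\<forall>\<^sub>F n in sequentially. phi n x = 1"
proof -
  obtain n0 :: nat where n0: "1 / x + 1 / (1 - x) \<le> real n0" using real_arch_simple by blast
  have p1: "0 \<le> 1 / x" "0 \<le> 1 / (1 - x)" using assms by auto
  have "1 / x \<le> real n0" "1 / (1 - x) \<le> real n0" using n0 p1 by linarith+
  then have a: "1 \<le> real n0 * x" "1 \<le> real n0 * (1 - x)" using assms by (simp_all add: pos_divide_le_eq)
  show ?thesis unfolding eventually_sequentially
  proof (rule exI[of _ n0], intro allI impI)
    fix n assume "n0 \<le> n"
    then have "real n0 * x \<le> real n * x" "real n0 * (1 - x) \<le> real n * (1 - x)"
      using assms by (auto intro!: mult_right_mono)
    then show "phi n x = 1" using a unfolding phi_def by auto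
  qed
qed

lemma cont_approx:
  assumes fm: "f measurable_on I01" and fb: "\<And>x. \<bar>f x\<bar> \<le> M" and e: "\<epsilon> > 0"
  obtains Gc where "continuous_on I01 Gc" "Gc 0 = Gc 1" "ip (\<lambda>x. f x - Gc x) (\<lambda>x. f x - Gc x) < \<epsilon>"
proof -
  have M0: "0 \<le> M" using fb[of 0] by simp
  obtain N g where N: "negligible N" and gc: "\<And>n. continuous_on UNIV (g n)"
    and gl: "\<And>x. x \<notin> N \<Longrightarrow> (\<lambda>n. g n x) \<longlonglongrightarrow> (if x \<in> I01 then f x else 0)"
    using fm unfolding measurable_on_def by blast
  define Gn where "Gn n x = phi n x * clampf M (g n x)" for n x
  have cg: "continuous_on A (\<lambda>x. clampf M (g n x))" for n A
  proof -
    have "continuous_on UNIV (clampf M \<circ> g n)" by (rule continuous_on_compose[OF gc clampf_cont])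
    then have "continuous_on UNIV (\<lambda>x. clampf M (g n x))" by (simp add: o_def)
    then show ?thesis by (rule continuous_on_subset) simp
  qed
  have Gnc: "continuous_on A (Gn n)" for n A
    unfolding Gn_def by (intro continuous_on_mult phi_cont cg)
  have Gnb: "\<bar>Gn n x\<bar> \<le> M" for n x
  proof -
    have "\<bar>Gn n x\<bar> = phi n x * \<bar>clampf M (g n x)\<bar>" unfolding Gn_def using phi_01 by (simp add: abs_mult)
    also have "\<dots> \<le> 1 * M" by (intro mult_mono phi_01 clampf_bound M0) auto
    finally show ?thesis by simp
  qed
  define N' where "N' = N \<union> {0, 1}"
  have N': "negligible N'" unfolding N'_def using N by simp
  define D where "D n x = (f x - Gn n x)^2" for n x
  define D' where "D' n x = (if x \<in> N' then 0 else D n x)" for n x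
  have fL: "L2_01 f" using L2_bounded[OF fm] fb by blast
  have Di: "D n integrable_on I01" for n
    unfolding D_def using L2_sq[OF L2_diff[OF fL L2_cont[OF Gnc]]] by simp
  have D'i: "D' n integrable_on I01" for n
    by (rule integrable_spike[OF Di N']) (simp add: D'_def)
  have D'eq: "integral I01 (D' n) = integral I01 (D n)" for n
    by (rule integral_spike[OF N']) (simp add: D'_def)
  have Db: "norm (D' n x) \<le> (2 * M)^2" for n x
  proof -
    have "\<bar>f x - Gn n x\<bar> \<le> 2 * M" using fb[of x] Gnb[of n x] by linarith
    then have "\<bar>f x - Gn n x\<bar>^2 \<le> (2 * M)^2" by (intro power_mono) auto
    then show ?thesis using M0 by (auto simp: D'_def D_def)
  qed
  have Dc: "(\<lambda>n. D' n x) \<longlonglongrightarrow> 0" if x: "x \<in> I01" for x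
  proof (cases "x \<in> N'")
    case True then show ?thesis by (simp add: D'_def)
  next
    case False
    then have xN: "x \<notin> N" and x01: "0 < x" "x < 1" using x by (auto simp: N'_def)
    have "(\<lambda>n. g n x) \<longlonglongrightarrow> f x" using gl[OF xN] x by simp
    then have c: "(\<lambda>n. clampf M (g n x)) \<longlonglongrightarrow> clampf M (f x)"
      using continuous_on_tendsto_compose[OF clampf_cont[of UNIV]] by auto
    have p: "(\<lambda>n. phi n x) \<longlonglongrightarrow> 1" by (rule tendsto_eventually[OF phi_lim[OF x01]])
    have "(\<lambda>n. Gn n x) \<longlonglongrightarrow> 1 * clampf M (f x)" unfolding Gn_def by (rule tendsto_mult[OF p c])
    then have "(\<lambda>n. Gn n x) \<longlonglongrightarrow> f x" using clampf_id[OF fb[of x]] by simp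
    then have "(\<lambda>n. (f x - Gn n x)^2) \<longlonglongrightarrow> (f x - f x)^2" by (intro tendsto_intros)
    then show ?thesis using False by (simp add: D'_def D_def)
  qed
  have lim: "(\<lambda>n. integral I01 (D' n)) \<longlonglongrightarrow> integral I01 (\<lambda>x. 0)"
    by (rule dominated_convergence(2)[OF D'i _ Db Dc]) simp_all
  then have "\<forall>\<^sub>F n in sequentially. integral I01 (D' n) < \<epsilon>"
    using e by (simp add: order_tendstoD(2))
  then obtain n where "integral I01 (D' n) < \<epsilon>" by (meson eventually_sequentially order_refl)
  moreover have "D n = (\<lambda>x. (f x - Gn n x)^2)" by (simp add: fun_eq_iff D_def)
  ultimately have "ip (\<lambda>x. f x - Gn n x) (\<lambda>x. f x - Gn n x) < \<epsilon>"
    by (simp add: D'eq sq_int[symmetric])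
  moreover have "Gn n 0 = Gn n 1" by (simp add: Gn_def phi_ends)
  ultimately show ?thesis using that[OF Gnc] by blast
qed


lemma density:
  assumes h: "L2_01 h" and e: "\<epsilon> > 0"
  obtains q where "TP q" "ip (\<lambda>x. h x - q x) (\<lambda>x. h x - q x) < \<epsilon>"
proof -
  obtain M where M: "M \<ge> 0" "ip (\<lambda>x. h x - clampf M (h x)) (\<lambda>x. h x - clampf M (h x)) < \<epsilon> / 16"
    using trunc_approx[OF h, of "\<epsilon> / 16"] e by auto
  have hMm: "(\<lambda>x. clampf M (h x)) measurable_on I01" by (rule mo_clampf[OF L2_meas[OF h]])
  have hMb: "\<bar>clampf M (h x)\<bar> \<le> M" for x by (rule clampf_bound[OF M(1)])
  have hML: "L2_01 (\<lambda>x. clampf M (h x))" by (rule L2_bounded[OF hMm hMb])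
  obtain Gc where Gc: "continuous_on I01 Gc" "Gc 0 = Gc 1"
    "ip (\<lambda>x. clampf M (h x) - Gc x) (\<lambda>x. clampf M (h x) - Gc x) < \<epsilon> / 16"
    using cont_approx[OF hMm hMb, of "\<epsilon> / 16"] e by auto
  have GL: "L2_01 Gc" by (rule L2_cont[OF Gc(1)])
  have hG: "ip (\<lambda>x. h x - Gc x) (\<lambda>x. h x - Gc x) < \<epsilon> / 4"
  proof -
    have "ip (\<lambda>x. (h x - clampf M (h x)) + (clampf M (h x) - Gc x)) (\<lambda>x. (h x - clampf M (h x)) + (clampf M (h x) - Gc x))
      \<le> 2 * ip (\<lambda>x. h x - clampf M (h x)) (\<lambda>x. h x - clampf M (h x)) + 2 * ip (\<lambda>x. clampf M (h x) - Gc x) (\<lambda>x. clampf M (h x) - Gc x)"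
      by (rule ip_sq_add_le) (intro L2_diff h hML GL)+
    then show ?thesis using M(2) Gc(3) by simp
  qed
  define d where "d = sqrt (\<epsilon> / 8)"
  have d0: "d > 0" using e by (simp add: d_def)
  obtain q where q: "TP q" "\<And>t. t \<in> I01 \<Longrightarrow> \<bar>Gc t - q t\<bar> < d"
    using trig_approx[OF Gc(1) Gc(2) d0] by blast
  have qL: "L2_01 q" by (rule TP_L2[OF q(1)])
  have Gq: "ip (\<lambda>x. Gc x - q x) (\<lambda>x. Gc x - q x) \<le> \<epsilon> / 8"
  proof -
    have "ip (\<lambda>x. Gc x - q x) (\<lambda>x. Gc x - q x) = integral I01 (\<lambda>x. (Gc x - q x)^2)" by (simp add: sq_int)
    also have "\<dots> \<le> integral I01 (\<lambda>x. d^2)"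
    proof (rule integral_le)
      show "(\<lambda>x. (Gc x - q x)^2) integrable_on I01" using L2_sq[OF L2_diff[OF GL qL]] .
      show "(\<lambda>x. d^2) integrable_on I01" by simp
      show "(Gc x - q x)^2 \<le> d^2" if "x \<in> I01" for x
      proof -
        have "\<bar>Gc x - q x\<bar>^2 \<le> d^2" using q(2)[OF that] by (intro power_mono) auto
        then show ?thesis by simp
      qed
    qed
    also have "\<dots> = \<epsilon> / 8" using e by (simp add: d_def)
    finally show ?thesis .
  qed
  have "ip (\<lambda>x. (h x - Gc x) + (Gc x - q x)) (\<lambda>x. (h x - Gc x) + (Gc x - q x))
      \<le> 2 * ip (\<lambda>x. h x - Gc x) (\<lambda>x. h x - Gc x) + 2 * ip (\<lambda>x. Gc x - q x) (\<lambda>x. Gc x - q x)"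
    by (rule ip_sq_add_le) (intro L2_diff h GL qL)+
  then have "ip (\<lambda>x. h x - q x) (\<lambda>x. h x - q x) < \<epsilon>" using hG Gq e by (simp; linarith)
  then show ?thesis using that[OF q(1)] by blast
qed

lemma EN_lim:
  assumes a: "\<bar>a\<bar> < 1" and h: "L2_01 h"
  shows "(\<lambda>N. EN a N h) \<longlonglongrightarrow> 0"
proof (rule LIMSEQ_I)
  fix r :: real assume r: "0 < r"
  obtain q where q: "TP q" "ip (\<lambda>x. h x - q x) (\<lambda>x. h x - q x) < r / 4"
    using density[OF h, of "r / 4"] r by auto
  have qL: "L2_01 q" by (rule TP_L2[OF q(1)])
  obtain N0 where N0: "\<forall>N\<ge>N0. EN a N q = 0" using TP_EN[OF a q(1)] by blast
  have "norm (EN a N h - 0) < r" if "N \<ge> N0" for N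
  proof -
    have "EN a N (\<lambda>x. (h x - q x) + q x) \<le> 2 * EN a N (\<lambda>x. h x - q x) + 2 * EN a N q"
      by (rule EN_add_le[OF a L2_diff[OF h qL] qL])
    moreover have "EN a N (\<lambda>x. h x - q x) \<le> ip (\<lambda>x. h x - q x) (\<lambda>x. h x - q x)"
      by (rule EN_le[OF a L2_diff[OF h qL]])
    moreover have "EN a N q = 0" using N0 that by simp
    moreover have "EN a N (\<lambda>x. (h x - q x) + q x) = EN a N h" by simp
    ultimately have "EN a N h < r" using q(2) r by linarith
    then show ?thesis using EN_nonneg[of a N h] by simp
  qed
  then show "\<exists>no. \<forall>n\<ge>no. norm (EN a n h - 0) < r" by blast
qed

lemma U_odd: "odd n \<Longrightarrow> U a b n = (\<lambda>x. sqrt (1 - a^2) * G a b n x)"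
  by (auto simp: fun_eq_iff U_def ctil_def stil_def chat_G shat_G)

lemma U_even: "even n \<Longrightarrow> U a b n = (\<lambda>x. sqrt (1 - a^2) * (sqrt (1 - a^2) * G a b n x) - a * trig b (n div 2) x)"
  by (auto simp: fun_eq_iff U_def ctil_def stil_def chat_G shat_G trig_def)

lemma coef_ip:
  assumes a: "\<bar>a\<bar> < 1" and h: "L2_01 h" and n: "n \<ge> 1"
    and al: "\<And>m. m \<ge> 1 \<Longrightarrow> \<alpha> m = ip h (trig b m)"
  shows "coef_til a \<alpha> n = ip h (U a b n)"
proof -
  have s: "(\<lambda>m. a^m * \<alpha> (n * 2^m)) sums ip h (G a b n)"
  proof -
    have "(\<lambda>m. a^m * ip h (trig b (n * 2^m))) sums ip h (G a b n)" by (rule ip_G[OF a h])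
    moreover have "\<alpha> (n * 2^m) = ip h (trig b (n * 2^m))" for m
      using n by (intro al) (simp add: Suc_le_eq)
    ultimately show ?thesis by simp
  qed
  then have sm: "(\<Sum>m. a^m * \<alpha> (n * 2^m)) = ip h (G a b n)" by (simp add: sums_iff)
  show ?thesis
  proof (cases "odd n")
    case True
    then show ?thesis using n by (simp add: coef_til_def U_odd ip_cmul_right sm)
  next
    case False
    then have n2: "n div 2 \<ge> 1" using n by auto
    have "ip h (U a b n) = sqrt (1 - a^2) * (sqrt (1 - a^2) * ip h (G a b n)) - a * ip h (trig b (n div 2))"
      unfolding U_even[OF False[unfolded not_not]]
      by (simp add: ip_diff_right L2_cmul L2_G[OF a] L2_trig h ip_cmul_right)
    also have "\<dots> = (1 - a^2) * ip h (G a b n) - a * \<alpha> (n div 2)"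
      using s_sq[OF a] al[OF n2] by (simp add: mult.assoc[symmetric])
    finally show ?thesis using False n by (simp add: coef_til_def sm)
  qed
qed

theorem theorem5p3:
  fixes a :: real and h :: "real \<Rightarrow> real" and \<alpha> \<beta> :: "nat \<Rightarrow> real"
  assumes "\<bar>a\<bar> < 1"
    and "L2_01 h"
    and "\<alpha> 0 = integral {0..1} h"
    and "\<And>n. n \<ge> 1 \<Longrightarrow> \<alpha> n = integral {0..1} (\<lambda>x. h x * cfun n x)"
    and "\<And>n. n \<ge> 1 \<Longrightarrow> \<beta> n = integral {0..1} (\<lambda>x. h x * sfun n x)"
  shows "(\<lambda>N. integral {0..1} (\<lambda>x. (h x - (coef_til a \<alpha> 0
            + (\<Sum>n\<in>{1..N}. coef_til a \<alpha> n * ctil a n x + coef_til a \<beta> n * stil a n x)))^2))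
         \<longlonglongrightarrow> 0"
proof -
  note a = assms(1) and h = assms(2)
  have al: "\<And>m. m \<ge> 1 \<Longrightarrow> \<alpha> m = ip h (trig True m)"
    using assms(4) by (simp add: ip_def trig_True)
  have be: "\<And>m. m \<ge> 1 \<Longrightarrow> \<beta> m = ip h (trig False m)"
    using assms(5) by (simp add: ip_def trig_False)
  have c0: "coef_til a \<alpha> 0 = ip h (\<lambda>x. 1)"
    using assms(3) by (simp add: coef_til_def ip_def)
  have P: "coef_til a \<alpha> 0 + (\<Sum>n\<in>{1..N}. coef_til a \<alpha> n * ctil a n x + coef_til a \<beta> n * stil a n x)
     = PN a N h x" for N x
  proof -
    have "PN a N h x = ip h (\<lambda>x. 1) + (\<Sum>n\<in>{1..N}. ip h (U a True n) * U a True n x + ip h (U a False n) * U a False n x)"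
      unfolding PN_def sum_Ix by (simp add: uf_def)
    also have "\<dots> = coef_til a \<alpha> 0 + (\<Sum>n\<in>{1..N}. coef_til a \<alpha> n * ctil a n x + coef_til a \<beta> n * stil a n x)"
      unfolding c0
      by (intro arg_cong2[where f="(+)"] refl sum.cong)
         (auto simp: coef_ip[OF a h _ al] coef_ip[OF a h _ be] U_def)
    finally show ?thesis by simp
  qed
  have "(\<lambda>N. integral {0..1} (\<lambda>x. (h x - (coef_til a \<alpha> 0
            + (\<Sum>n\<in>{1..N}. coef_til a \<alpha> n * ctil a n x + coef_til a \<beta> n * stil a n x)))^2))
      = (\<lambda>N. EN a N h)"
    unfolding P EN_def sq_int ..
  then show ?thesis using EN_lim[OF a h] by simp
qed


end
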